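(* Let $T$ be a complete theory with monster model $\mathcal{U}$, $\mu\in\mathfrak{M}_x(\mathcal{U})$, $\nu\in\mathfrak{M}_y(\mathcal{U})$, and $f:\mathcal{U}^y\to\mathcal{U}^z$ a definable map (with parameters). If $\mu\geq_{\mathbb{E}}\nu$, then $\mu\geq_{\mathbb{E}}f(\nu)$.
   Context: For $C\subseteq\mathcal{U}$, $\mathcal{L}_x(C)$ is the Boolean algebra of formulas in $x$ with parameters from $C$ modulo $T$, embedded in $\mathcal{L}_{xy}(C)$ via $\varphi(x)\mapsto\varphi(x)\wedge y=y$; $\mathfrak{M}_x(C)$ is the set of finitely additive probability measures on $\mathcal{L}_x(C)$. For $\omega\in\mathfrak{M}_{xy}(C)$, $\pi_x(\omega)(\varphi(x))=\omega(\varphi(x)\wedge y=y)$ (similarly $\pi_y$); $\omega|_D$ is restriction. The push-forward is $f(\nu)(\psi(z))=\nu(\psi(f(y)))$. For small $A$, $\mu\geq_{\mathbb{E},A}\nu$ means there is $\lambda\in\mathfrak{M}_{xy}(A)$ with $\pi_x(\lambda)=\mu|_A$ such that every $\omega\in\mathfrak{M}_{xy}(\mathcal{U})$ with $\omega|_A=\lambda$ and $\pi_x(\omega)=\mu$ satisfies $\pi_y(\omega)=\nu$; $\mu\geq_{\mathbb{E}}\nu$ means this holds for some small $A$ (defined analogously for other variable tuples). *)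

theory Defs
  imports Main "HOL.Real"
begin

text \<open>Terms and formulas of a first-order language with function symbols 'f and
relation symbols 'r (each symbol may be applied to argument lists of any length).
Variables are natural numbers.\<close>

datatype 'f trm = Var nat | Fn 'f "'f trm list"

datatype ('f, 'r) form = Bot | Equ "'f trm" "'f trm" | Rl 'r "'f trm list"
  | Neg "('f, 'r) form" | Conj "('f, 'r) form" "('f, 'r) form" | Exi nat "('f, 'r) form"

fun evt :: "('f \<Rightarrow> 'u list \<Rightarrow> 'u) \<Rightarrow> (nat \<Rightarrow> 'u) \<Rightarrow> 'f trm \<Rightarrow> 'u" where
  "evt F e (Var i) = e i"
| "evt F e (Fn g ts) = F g (map (evt F e) ts)"

fun sat :: "('f \<Rightarrow> 'u list \<Rightarrow> 'u) \<Rightarrow> ('r \<Rightarrow> 'u list \<Rightarrow> bool) \<Rightarrow> (nat \<Rightarrow> 'u)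
    \<Rightarrow> ('f, 'r) form \<Rightarrow> bool" where
  "sat F R e Bot = False"
| "sat F R e (Equ s t) = (evt F e s = evt F e t)"
| "sat F R e (Rl r ts) = R r (map (evt F e) ts)"
| "sat F R e (Neg p) = (\<not> sat F R e p)"
| "sat F R e (Conj p q) = (sat F R e p \<and> sat F R e q)"
| "sat F R e (Exi i p) = (\<exists>a. sat F R (e(i := a)) p)"

fun fvt :: "'f trm \<Rightarrow> nat set" where
  "fvt (Var i) = {i}"
| "fvt (Fn g ts) = \<Union> (set (map fvt ts))"

fun fv :: "('f, 'r) form \<Rightarrow> nat set" where
  "fv Bot = {}"
| "fv (Equ s t) = fvt s \<union> fvt t"
| "fv (Rl r ts) = \<Union> (set (map fvt ts))"
| "fv (Neg p) = fv p"
| "fv (Conj p q) = fv p \<union> fv q"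
| "fv (Exi i p) = fv p - {i}"

text \<open>The structure U has universe the type 'u (= the monster model).
An n-tuple of variables x is represented by tuples (lists) of length n; the
formula phi(x, c) with parameters c = ps from C defines the set of n-tuples v
with U |= phi(v, ps). Since T = Th(U) is complete, formulas with parameters in C
modulo T correspond exactly to these C-definable sets.\<close>

definition defsets :: "('f \<Rightarrow> 'u list \<Rightarrow> 'u) \<Rightarrow> ('r \<Rightarrow> 'u list \<Rightarrow> bool) \<Rightarrow> nat
    \<Rightarrow> 'u set \<Rightarrow> 'u list set set" where
  "defsets F R n C = {D. \<exists>(\<phi> :: ('f,'r) form) ps. set ps \<subseteq> C \<and> fv \<phi> \<subseteq> {..<n + length ps} \<and>
      D = {v. length v = n \<and> sat F R (\<lambda>i. (v @ ps) ! i) \<phi>}}"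

text \<open>Keisler measures on L_n(C): finitely additive probability measures on the
Boolean algebra of C-definable subsets of U^n (normalised to 0 outside it).\<close>

definition keisler :: "('f \<Rightarrow> 'u list \<Rightarrow> 'u) \<Rightarrow> ('r \<Rightarrow> 'u list \<Rightarrow> bool) \<Rightarrow> nat
    \<Rightarrow> 'u set \<Rightarrow> ('u list set \<Rightarrow> real) \<Rightarrow> bool" where
  "keisler F R n C m \<longleftrightarrow>
     (\<forall>D \<in> defsets F R n C. 0 \<le> m D) \<and>
     m {v. length v = n} = 1 \<and>
     (\<forall>D \<in> defsets F R n C. \<forall>E \<in> defsets F R n C. D \<inter> E = {} \<longrightarrow> m (D \<union> E) = m D + m E) \<and>
     (\<forall>D. D \<notin> defsets F R n C \<longrightarrow> m D = 0)"

definition restr :: "('f \<Rightarrow> 'u list \<Rightarrow> 'u) \<Rightarrow> ('r \<Rightarrow> 'u list \<Rightarrow> bool) \<Rightarrow> nat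
    \<Rightarrow> 'u set \<Rightarrow> ('u list set \<Rightarrow> real) \<Rightarrow> ('u list set \<Rightarrow> real)" where
  "restr F R n A m = (\<lambda>D. if D \<in> defsets F R n A then m D else 0)"

definition proj_x :: "('f \<Rightarrow> 'u list \<Rightarrow> 'u) \<Rightarrow> ('r \<Rightarrow> 'u list \<Rightarrow> bool) \<Rightarrow> nat \<Rightarrow> nat
    \<Rightarrow> 'u set \<Rightarrow> ('u list set \<Rightarrow> real) \<Rightarrow> ('u list set \<Rightarrow> real)" where
  "proj_x F R n k C \<omega> = (\<lambda>D. if D \<in> defsets F R n C
      then \<omega> {v @ w | v w. v \<in> D \<and> length w = k} else 0)"

definition proj_y :: "('f \<Rightarrow> 'u list \<Rightarrow> 'u) \<Rightarrow> ('r \<Rightarrow> 'u list \<Rightarrow> bool) \<Rightarrow> nat \<Rightarrow> nat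
    \<Rightarrow> 'u set \<Rightarrow> ('u list set \<Rightarrow> real) \<Rightarrow> ('u list set \<Rightarrow> real)" where
  "proj_y F R n k C \<omega> = (\<lambda>E. if E \<in> defsets F R k C
      then \<omega> {v @ w | v w. length v = n \<and> w \<in> E} else 0)"

definition definable_map :: "('f \<Rightarrow> 'u list \<Rightarrow> 'u) \<Rightarrow> ('r \<Rightarrow> 'u list \<Rightarrow> bool) \<Rightarrow> nat \<Rightarrow> nat
    \<Rightarrow> ('u list \<Rightarrow> 'u list) \<Rightarrow> bool" where
  "definable_map F R k m f \<longleftrightarrow>
     (\<forall>v. length v = k \<longrightarrow> length (f v) = m) \<and>
     {v @ w | v w. length v = k \<and> w = f v} \<in> defsets F R (k + m) UNIV"

definition push :: "('f \<Rightarrow> 'u list \<Rightarrow> 'u) \<Rightarrow> ('r \<Rightarrow> 'u list \<Rightarrow> bool) \<Rightarrow> nat \<Rightarrow> nat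
    \<Rightarrow> ('u list \<Rightarrow> 'u list) \<Rightarrow> ('u list set \<Rightarrow> real) \<Rightarrow> ('u list set \<Rightarrow> real)" where
  "push F R k m f \<nu> = (\<lambda>E. if E \<in> defsets F R m UNIV
      then \<nu> {w. length w = k \<and> f w \<in> E} else 0)"

text \<open>A set is small if its cardinality is strictly below |K| (kappa = |K|).\<close>

definition small :: "'k set \<Rightarrow> 'a set \<Rightarrow> bool" where
  "small K A \<longleftrightarrow> \<not> (\<exists>g. inj_on g K \<and> g ` K \<subseteq> A)"

definition saturated :: "'k set \<Rightarrow> ('f \<Rightarrow> 'u list \<Rightarrow> 'u) \<Rightarrow> ('r \<Rightarrow> 'u list \<Rightarrow> bool) \<Rightarrow> bool" where
  "saturated K F R \<longleftrightarrow> (\<forall>A P. small K A \<and> P \<subseteq> defsets F R 1 A \<and>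
      (\<forall>Q. Q \<subseteq> P \<and> finite Q \<longrightarrow> (\<exists>v. length v = 1 \<and> (\<forall>D\<in>Q. v \<in> D))) \<longrightarrow>
      (\<exists>v. length v = 1 \<and> (\<forall>D\<in>P. v \<in> D)))"

definition elem_map :: "('f \<Rightarrow> 'u list \<Rightarrow> 'u) \<Rightarrow> ('r \<Rightarrow> 'u list \<Rightarrow> bool) \<Rightarrow> 'u set
    \<Rightarrow> ('u \<Rightarrow> 'u) \<Rightarrow> bool" where
  "elem_map F R A g \<longleftrightarrow> (\<forall>(\<phi> :: ('f,'r) form) ps. set ps \<subseteq> A \<and> fv \<phi> \<subseteq> {..<length ps} \<longrightarrow>
      (sat F R (\<lambda>i. ps ! i) \<phi> \<longleftrightarrow> sat F R (\<lambda>i. map g ps ! i) \<phi>))"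

definition automorph :: "('f \<Rightarrow> 'u list \<Rightarrow> 'u) \<Rightarrow> ('r \<Rightarrow> 'u list \<Rightarrow> bool) \<Rightarrow> ('u \<Rightarrow> 'u) \<Rightarrow> bool" where
  "automorph F R \<sigma> \<longleftrightarrow> bij \<sigma> \<and> (\<forall>g us. \<sigma> (F g us) = F g (map \<sigma> us)) \<and>
      (\<forall>r us. R r (map \<sigma> us) = R r us)"

definition homogeneous :: "'k set \<Rightarrow> ('f \<Rightarrow> 'u list \<Rightarrow> 'u) \<Rightarrow> ('r \<Rightarrow> 'u list \<Rightarrow> bool) \<Rightarrow> bool" where
  "homogeneous K F R \<longleftrightarrow> (\<forall>A g. small K A \<and> elem_map F R A g \<longrightarrow>
      (\<exists>\<sigma>. automorph F R \<sigma> \<and> (\<forall>a\<in>A. \<sigma> a = g a)))"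

definition monster :: "'k set \<Rightarrow> ('f \<Rightarrow> 'u list \<Rightarrow> 'u) \<Rightarrow> ('r \<Rightarrow> 'u list \<Rightarrow> bool) \<Rightarrow> bool" where
  "monster K F R \<longleftrightarrow> infinite K \<and> small K (UNIV :: 'f set) \<and> small K (UNIV :: 'r set) \<and>
      saturated K F R \<and> homogeneous K F R"

definition geE_A :: "('f \<Rightarrow> 'u list \<Rightarrow> 'u) \<Rightarrow> ('r \<Rightarrow> 'u list \<Rightarrow> bool) \<Rightarrow> nat \<Rightarrow> nat \<Rightarrow> 'u set
    \<Rightarrow> ('u list set \<Rightarrow> real) \<Rightarrow> ('u list set \<Rightarrow> real) \<Rightarrow> bool" where
  "geE_A F R n k A \<mu> \<nu> \<longleftrightarrow> (\<exists>lam. keisler F R (n + k) A lam \<and>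
      proj_x F R n k A lam = restr F R n A \<mu> \<and>
      (\<forall>\<omega>. keisler F R (n + k) UNIV \<omega> \<and> restr F R (n + k) A \<omega> = lam \<and>
           proj_x F R n k UNIV \<omega> = \<mu> \<longrightarrow> proj_y F R n k UNIV \<omega> = \<nu>))"

definition geE :: "'k set \<Rightarrow> ('f \<Rightarrow> 'u list \<Rightarrow> 'u) \<Rightarrow> ('r \<Rightarrow> 'u list \<Rightarrow> bool) \<Rightarrow> nat \<Rightarrow> nat
    \<Rightarrow> ('u list set \<Rightarrow> real) \<Rightarrow> ('u list set \<Rightarrow> real) \<Rightarrow> bool" where
  "geE K F R n k \<mu> \<nu> \<longleftrightarrow> (\<exists>A. small K A \<and> geE_A F R n k A \<mu> \<nu>)"

end

theory Submission
  imports Defs "HOL-Analysis.Analysis"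
begin


lemma sum_upd_real:
  fixes f :: "'a \<Rightarrow> real"
  assumes "finite S"
  shows "sum (f(a := x)) S = (if a \<in> S then sum f S - f a + x else sum f S)"
proof (cases "a \<in> S")
  case True
  have "sum (f(a := x)) S = (f(a := x)) a + sum (f(a := x)) (S - {a})" by (rule sum.remove[OF assms True])
  then have "sum (f(a := x)) S = x + sum (f(a := x)) (S - {a})" by simp
  also have "sum (f(a := x)) (S - {a}) = sum f (S - {a})" by (rule sum.cong) auto
  also have "sum f (S - {a}) = sum f S - f a" using sum.remove[OF assms True, of f] by simp
  finally show ?thesis using True by simp
next
  case False
  then show ?thesis by (auto intro: sum.cong)
qed

definition nb :: "('i \<Rightarrow> 'j \<Rightarrow> bool) \<Rightarrow> 'j set \<Rightarrow> 'i set \<Rightarrow> 'j set" where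
  "nb E J S = {j\<in>J. \<exists>i\<in>S. E i j}"

definition hall :: "('i \<Rightarrow> 'j \<Rightarrow> bool) \<Rightarrow> 'i set \<Rightarrow> 'j set \<Rightarrow> ('i \<Rightarrow> real) \<Rightarrow> ('j \<Rightarrow> real) \<Rightarrow> bool" where
  "hall E I J s d \<longleftrightarrow> (\<forall>S\<subseteq>I. sum s S \<le> sum d (nb E J S))"

definition sol :: "('i \<Rightarrow> 'j \<Rightarrow> bool) \<Rightarrow> 'i set \<Rightarrow> 'j set \<Rightarrow> ('i \<Rightarrow> real) \<Rightarrow> ('j \<Rightarrow> real) \<Rightarrow> ('i \<Rightarrow> 'j \<Rightarrow> real) \<Rightarrow> bool" where
  "sol E I J s d q \<longleftrightarrow> (\<forall>i j. 0 \<le> q i j) \<and> (\<forall>i j. \<not> E i j \<longrightarrow> q i j = 0) \<and>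
     (\<forall>i\<in>I. sum (q i) J = s i) \<and> (\<forall>j\<in>J. (\<Sum>i\<in>I. q i j) \<le> d j)"

lemma SD_split:
  assumes IH: "\<And>I' J' s' d'. card I' + card J' < card I + card J \<Longrightarrow> finite I' \<Longrightarrow> finite J' \<Longrightarrow>
      (\<forall>i\<in>I'. 0 \<le> s' i) \<Longrightarrow> (\<forall>j\<in>J'. 0 \<le> d' j) \<Longrightarrow> hall E I' J' s' d' \<Longrightarrow> \<exists>q. sol E I' J' s' d' q"
    and fin: "finite I" "finite J" and nn: "\<forall>i\<in>I. 0 \<le> s i" "\<forall>j\<in>J. 0 \<le> d j"
    and h: "hall E I J s d" and S: "S \<subseteq> I" "S \<noteq> {}" "S \<noteq> I" and tight: "sum s S = sum d (nb E J S)"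
  shows "\<exists>q. sol E I J s d q"
proof -
  define N where "N = nb E J S"
  have NJ: "N \<subseteq> J" by (auto simp: N_def nb_def)
  have finS: "finite S" using S(1) fin(1) finite_subset by blast
  have finN: "finite N" using NJ fin(2) finite_subset by blast
  have "S \<subset> I" using S by blast
  then have cS: "card S < card I" using fin(1) by (meson psubset_card_mono)
  have "I - S \<subset> I" using S by blast
  then have cIS: "card (I - S) < card I" using fin(1) by (meson psubset_card_mono)
  have cN: "card N \<le> card J" using NJ fin(2) card_mono by blast
  have cJN: "card (J - N) \<le> card J" using fin(2) card_mono by blast
  have h1: "hall E S N s d"
    unfolding hall_def
  proof (intro allI impI)
    fix T assume "T \<subseteq> S"
    then have "nb E N T = nb E J T" by (auto simp: nb_def N_def)
    then show "sum s T \<le> sum d (nb E N T)" using h \<open>T \<subseteq> S\<close> S(1) by (auto simp: hall_def)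
  qed
  have h2: "hall E (I - S) (J - N) s d"
    unfolding hall_def
  proof (intro allI impI)
    fix T assume T: "T \<subseteq> I - S"
    have finT: "finite T" using T fin(1) finite_subset by blast
    have disj: "T \<inter> S = {}" using T by blast
    have "T \<union> S \<subseteq> I" using T S(1) by blast
    then have "sum s (T \<union> S) \<le> sum d (nb E J (T \<union> S))" using h unfolding hall_def by blast
    moreover have "sum s (T \<union> S) = sum s T + sum s S" using sum.union_disjoint[OF finT finS disj] by simp
    moreover have "nb E J (T \<union> S) = nb E (J - N) T \<union> N" by (auto simp: nb_def N_def)
    moreover have "sum d (nb E (J - N) T \<union> N) = sum d (nb E (J - N) T) + sum d N"
      by (rule sum.union_disjoint) (auto simp: nb_def finN intro: finite_subset[OF _ fin(2)])
    ultimately show "sum s T \<le> sum d (nb E (J - N) T)" using tight N_def by simp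
  qed
  have nnS: "\<forall>i\<in>S. 0 \<le> s i" "\<forall>j\<in>N. 0 \<le> d j" using nn S(1) NJ by auto
  obtain q1 where q1: "sol E S N s d q1"
    using IH[of S N s d] cS cN finS finN nnS h1 by auto
  obtain q2 where q2: "sol E (I - S) (J - N) s d q2"
    using IH[of "I - S" "J - N" s d] cIS cJN fin nn h2 by auto
  define q where "q = (\<lambda>i j. if i \<in> S then (if j \<in> N then q1 i j else 0) else (if j \<notin> N then q2 i j else 0))"
  have "sol E I J s d q"
    unfolding sol_def
  proof (intro conjI allI impI ballI)
    fix i j show "0 \<le> q i j" using q1 q2 by (auto simp: q_def sol_def)
  next
    fix i j assume "\<not> E i j" then show "q i j = 0" using q1 q2 by (auto simp: q_def sol_def)
  next
    fix i assume i: "i \<in> I"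
    show "sum (q i) J = s i"
    proof (cases "i \<in> S")
      case True
      have "sum (q i) J = sum (q1 i) N"
        using True NJ fin(2) by (simp add: q_def sum.If_cases Int_absorb1 Int_commute)
      then show ?thesis using q1 True by (auto simp: sol_def)
    next
      case False
      have "sum (q i) J = sum (q2 i) (J - N)"
        using False fin(2) by (simp add: q_def sum.If_cases Diff_eq Int_commute Compl_eq)
      then show ?thesis using q2 False i by (auto simp: sol_def)
    qed
  next
    fix j assume j: "j \<in> J"
    have split: "(\<Sum>i\<in>I. q i j) = (\<Sum>i\<in>S. q i j) + (\<Sum>i\<in>I - S. q i j)"
      using sum.subset_diff[OF S(1) fin(1), of "\<lambda>i. q i j"] by simp
    show "(\<Sum>i\<in>I. q i j) \<le> d j"
    proof (cases "j \<in> N")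
      case True
      have "(\<Sum>i\<in>S. q i j) = (\<Sum>i\<in>S. q1 i j)" by (rule sum.cong) (auto simp: q_def True)
      moreover have "(\<Sum>i\<in>I - S. q i j) = 0" by (rule sum.neutral) (auto simp: q_def True)
      ultimately show ?thesis using split q1 True by (auto simp: sol_def)
    next
      case False
      have "(\<Sum>i\<in>I - S. q i j) = (\<Sum>i\<in>I - S. q2 i j)" by (rule sum.cong) (auto simp: q_def False)
      moreover have "(\<Sum>i\<in>S. q i j) = 0" by (rule sum.neutral) (auto simp: q_def False)
      ultimately show ?thesis using split q2 False j by (auto simp: sol_def)
    qed
  qed
  then show ?thesis by blast
qed

lemma SD:
  assumes "finite I" "finite J" "\<forall>i\<in>I. 0 \<le> s i" "\<forall>j\<in>J. 0 \<le> d j" "hall E I J s d"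
  shows "\<exists>q. sol E I J s d q"
  using assms
proof (induction "card I + card J" arbitrary: I J s d rule: less_induct)
  case less
  note IH = less.hyps
  note fin = less.prems(1,2)
  note nn = less.prems(3,4)
  note h = less.prems(5)
  show ?case
  proof (cases "I = {}")
    case True
    have "sol E I J s d (\<lambda>i j. 0)" using True nn by (auto simp: sol_def)
    then show ?thesis by blast
  next
    case Ine: False
    show ?thesis
    proof (cases "\<exists>S. S \<subseteq> I \<and> S \<noteq> {} \<and> S \<noteq> I \<and> sum s S = sum d (nb E J S)")
      case True
      then obtain S where S: "S \<subseteq> I" "S \<noteq> {}" "S \<noteq> I" "sum s S = sum d (nb E J S)" by blast
      show ?thesis by (rule SD_split[OF IH fin nn h S]) auto
    next
      case notight: False
      show ?thesis
      proof (cases "\<exists>i0\<in>I. s i0 = 0")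
        case True
        then obtain i0 where i0: "i0 \<in> I" "s i0 = 0" by blast
        have hI: "hall E (I - {i0}) J s d" using h by (auto simp: hall_def)
        have "card (I - {i0}) < card I" using fin(1) i0(1) by (rule card_Diff1_less)
        then have lt: "card (I - {i0}) + card J < card I + card J" by simp
        have f1: "finite (I - {i0})" using fin(1) by simp
        have n1: "\<forall>i\<in>I - {i0}. 0 \<le> s i" using nn by simp
        obtain q where q: "sol E (I - {i0}) J s d q"
          using IH[OF lt f1 fin(2) n1 nn(2) hI] by blast
        define q' where "q' = (\<lambda>i j. if i = i0 then 0 else q i j)"
        have "sol E I J s d q'"
          unfolding sol_def
        proof (intro conjI allI impI ballI)
          fix i j show "0 \<le> q' i j" using q by (auto simp: q'_def sol_def)
        next
          fix i j assume "\<not> E i j" then show "q' i j = 0" using q by (auto simp: q'_def sol_def)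
        next
          fix i assume "i \<in> I" then show "sum (q' i) J = s i" using q i0 by (cases "i = i0") (auto simp: q'_def sol_def)
        next
          fix j assume j: "j \<in> J"
          have "(\<Sum>i\<in>I. q' i j) = q' i0 j + (\<Sum>i\<in>I - {i0}. q' i j)" by (rule sum.remove[OF fin(1) i0(1)])
          also have "\<dots> = (\<Sum>i\<in>I - {i0}. q i j)" by (simp add: q'_def)
          finally show "(\<Sum>i\<in>I. q' i j) \<le> d j" using q j by (auto simp: sol_def)
        qed
        then show ?thesis by blast
      next
        case False
        have spos: "\<forall>i\<in>I. 0 < s i"
        proof
          fix i assume i: "i \<in> I"
          then have "0 \<le> s i" "s i \<noteq> 0" using nn False by auto
          then show "0 < s i" by linarith
        qed
        obtain i0 where i0: "i0 \<in> I" using Ine by blast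
        have "s i0 \<le> sum d (nb E J {i0})" using h i0 by (auto simp: hall_def)
        then have "\<exists>j0\<in>nb E J {i0}. 0 < d j0"
        proof -
          assume a: "s i0 \<le> sum d (nb E J {i0})"
          { assume "\<forall>j\<in>nb E J {i0}. d j \<le> 0"
            then have "sum d (nb E J {i0}) \<le> 0" by (simp add: sum_nonpos)
            moreover have "0 < s i0" using spos i0 by blast
            ultimately have False using a by linarith }
          then show ?thesis using not_le by blast
        qed
        then obtain j0 where j0: "j0 \<in> J" "E i0 j0" "0 < d j0" by (auto simp: nb_def)
        define TT where "TT = {S. S \<subseteq> I - {i0} \<and> S \<noteq> {} \<and> j0 \<in> nb E J S}"
        define slack where "slack = (\<lambda>S. sum d (nb E J S) - sum s S)"
        have finTT: "finite TT"
          by (rule finite_subset[of _ "Pow I"]) (auto simp: TT_def fin(1))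
        define t where "t = Min (insert (s i0) (insert (d j0) (slack ` TT)))"
        have slpos: "0 < slack S" if "S \<in> TT" for S
        proof -
          have S: "S \<subseteq> I" "S \<noteq> {}" "S \<noteq> I" using that i0 by (auto simp: TT_def)
          have "sum s S \<le> sum d (nb E J S)" using h S by (auto simp: hall_def)
          moreover have "sum s S \<noteq> sum d (nb E J S)" using notight S by blast
          ultimately show ?thesis by (simp add: slack_def)
        qed
        have finM: "finite (insert (s i0) (insert (d j0) (slack ` TT)))" using finTT by simp
        have tpos: "0 < t" unfolding t_def using finM slpos spos i0 j0 by (auto simp: Min_gr_iff)
        have tle: "t \<le> x" if "x \<in> insert (s i0) (insert (d j0) (slack ` TT))" for x
          unfolding t_def using finM that by (rule Min_le)
        have tle1: "t \<le> s i0" and tle2: "t \<le> d j0" and tle3: "\<And>S. S \<in> TT \<Longrightarrow> t \<le> slack S"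
          by (auto intro!: tle)
        have tin: "t \<in> insert (s i0) (insert (d j0) (slack ` TT))"
          unfolding t_def using finM by (rule Min_in) simp
        define s' where "s' = s(i0 := s i0 - t)"
        define d' where "d' = d(j0 := d j0 - t)"
        have nn': "\<forall>i\<in>I. 0 \<le> s' i" "\<forall>j\<in>J. 0 \<le> d' j" using nn tle1 tle2 by (auto simp: s'_def d'_def)
        have h': "hall E I J s' d'"
          unfolding hall_def
        proof (intro allI impI)
          fix S assume S: "S \<subseteq> I"
          have finS: "finite S" using S fin(1) finite_subset by blast
          have finNS: "finite (nb E J S)" using fin(2) by (auto simp: nb_def)
          have hS: "sum s S \<le> sum d (nb E J S)" using h S by (auto simp: hall_def)
          have ss: "sum s' S = (if i0 \<in> S then sum s S - t else sum s S)"
            unfolding s'_def using sum_upd_real[OF finS] by simp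
          have dd: "sum d' (nb E J S) = (if j0 \<in> nb E J S then sum d (nb E J S) - t else sum d (nb E J S))"
            unfolding d'_def using sum_upd_real[OF finNS] by simp
          show "sum s' S \<le> sum d' (nb E J S)"
          proof (cases "i0 \<in> S")
            case True
            then have "j0 \<in> nb E J S" using j0 by (auto simp: nb_def)
            then show ?thesis using ss dd hS True by simp
          next
            case False
            show ?thesis
            proof (cases "j0 \<in> nb E J S")
              case True
              then have "S \<noteq> {}" by (auto simp: nb_def)
              then have "S \<in> TT" using S False True by (auto simp: TT_def)
              then have "t \<le> slack S" by (rule tle3)
              then show ?thesis using ss dd False True by (simp add: slack_def)
            next
              case False2: False
              then show ?thesis using ss dd False hS by simp
            qed
          qed
        qed
        have "\<exists>q. sol E I J s' d' q"
        proof -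
          consider "t = s i0" | "t = d j0" | S0 where "S0 \<in> TT" "t = slack S0" using tin by blast
          then show ?thesis
          proof cases
            case 1
            then have z: "s' i0 = 0" by (simp add: s'_def)
            have hI: "hall E (I - {i0}) J s' d'" using h' by (auto simp: hall_def)
            have "card (I - {i0}) < card I" using fin(1) i0(1) by (rule card_Diff1_less)
            then have lt: "card (I - {i0}) + card J < card I + card J" by simp
            have f1: "finite (I - {i0})" using fin(1) by simp
            have n1: "\<forall>i\<in>I - {i0}. 0 \<le> s' i" using nn' by simp
            obtain q where q: "sol E (I - {i0}) J s' d' q"
              using IH[OF lt f1 fin(2) n1 nn'(2) hI] by blast
            define q' where "q' = (\<lambda>i j. if i = i0 then 0 else q i j)"
            have "sol E I J s' d' q'"
              unfolding sol_def
            proof (intro conjI allI impI ballI)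
              fix i j show "0 \<le> q' i j" using q by (auto simp: q'_def sol_def)
            next
              fix i j assume "\<not> E i j" then show "q' i j = 0" using q by (auto simp: q'_def sol_def)
            next
              fix i assume "i \<in> I" then show "sum (q' i) J = s' i" using q z by (cases "i = i0") (auto simp: q'_def sol_def)
            next
              fix j assume j: "j \<in> J"
              have "(\<Sum>i\<in>I. q' i j) = q' i0 j + (\<Sum>i\<in>I - {i0}. q' i j)" by (rule sum.remove[OF fin(1) i0(1)])
              also have "\<dots> = (\<Sum>i\<in>I - {i0}. q i j)" by (simp add: q'_def)
              finally show "(\<Sum>i\<in>I. q' i j) \<le> d' j" using q j by (auto simp: sol_def)
            qed
            then show ?thesis by blast
          next
            case 2
            then have z: "d' j0 = 0" by (simp add: d'_def)
            have nbJ: "nb E (J - {j0}) S = nb E J S - {j0}" for S by (auto simp: nb_def)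
            have hJ: "hall E I (J - {j0}) s' d'"
              unfolding hall_def
            proof (intro allI impI)
              fix S assume S: "S \<subseteq> I"
              have finNS: "finite (nb E J S)" using fin(2) by (auto simp: nb_def)
              have "sum d' (nb E J S - {j0}) = sum d' (nb E J S)"
              proof (cases "j0 \<in> nb E J S")
                case True
                have "sum d' (nb E J S) = d' j0 + sum d' (nb E J S - {j0})" by (rule sum.remove[OF finNS True])
                then show ?thesis using z by simp
              next
                case False then show ?thesis by simp
              qed
              then show "sum s' S \<le> sum d' (nb E (J - {j0}) S)" using h' S nbJ by (auto simp: hall_def)
            qed
            have "card (J - {j0}) < card J" using fin(2) j0(1) by (rule card_Diff1_less)
            then have lt: "card I + card (J - {j0}) < card I + card J" by simp
            have f2: "finite (J - {j0})" using fin(2) by simp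
            have n2: "\<forall>j\<in>J - {j0}. 0 \<le> d' j" using nn' by simp
            obtain q where q: "sol E I (J - {j0}) s' d' q"
              using IH[OF lt fin(1) f2 nn'(1) n2 hJ] by blast
            define q' where "q' = (\<lambda>i j. if j = j0 then 0 else q i j)"
            have "sol E I J s' d' q'"
              unfolding sol_def
            proof (intro conjI allI impI ballI)
              fix i j show "0 \<le> q' i j" using q by (auto simp: q'_def sol_def)
            next
              fix i j assume "\<not> E i j" then show "q' i j = 0" using q by (auto simp: q'_def sol_def)
            next
              fix i assume i: "i \<in> I"
              have "sum (q' i) J = q' i j0 + sum (q' i) (J - {j0})" by (rule sum.remove[OF fin(2) j0(1)])
              also have "\<dots> = sum (q i) (J - {j0})" by (simp add: q'_def)
              finally show "sum (q' i) J = s' i" using q i by (auto simp: sol_def)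
            next
              fix j assume j: "j \<in> J"
              show "(\<Sum>i\<in>I. q' i j) \<le> d' j"
                using q j z by (cases "j = j0") (auto simp: q'_def sol_def)
            qed
            then show ?thesis by blast
          next
            case 3
            have S0: "S0 \<subseteq> I" "S0 \<noteq> {}" "S0 \<noteq> I" "i0 \<notin> S0" "j0 \<in> nb E J S0"
              using 3(1) i0 by (auto simp: TT_def)
            have finS: "finite S0" using S0 fin(1) finite_subset by blast
            have finNS: "finite (nb E J S0)" using fin(2) by (auto simp: nb_def)
            have "sum s' S0 = sum s S0" unfolding s'_def using sum_upd_real[OF finS] S0 by simp
            moreover have "sum d' (nb E J S0) = sum d (nb E J S0) - t"
              unfolding d'_def using sum_upd_real[OF finNS] S0 by simp
            ultimately have "sum s' S0 = sum d' (nb E J S0)" using 3(2) by (simp add: slack_def)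
            then show ?thesis by (intro SD_split[OF IH fin nn' h' S0(1,2,3)]) auto
          qed
        qed
        then obtain q where q: "sol E I J s' d' q" by blast
        define q' where "q' = (\<lambda>i j. q i j + (if i = i0 \<and> j = j0 then t else 0))"
        have "sol E I J s d q'"
          unfolding sol_def
        proof (intro conjI allI impI ballI)
          fix i j show "0 \<le> q' i j" using q tpos by (auto simp: q'_def sol_def)
        next
          fix i j assume "\<not> E i j" then show "q' i j = 0" using q j0 by (auto simp: q'_def sol_def)
        next
          fix i assume i: "i \<in> I"
          have "sum (q' i) J = sum (q i) J + (\<Sum>j\<in>J. if i = i0 \<and> j = j0 then t else 0)"
            by (simp add: q'_def sum.distrib)
          also have "(\<Sum>j\<in>J. if i = i0 \<and> j = j0 then t else 0) = (if i = i0 then t else 0)"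
            using j0 fin by (auto simp: sum.delta)
          finally show "sum (q' i) J = s i" using q i by (auto simp: sol_def s'_def)
        next
          fix j assume j: "j \<in> J"
          have "(\<Sum>i\<in>I. q' i j) = (\<Sum>i\<in>I. q i j) + (\<Sum>i\<in>I. if i = i0 \<and> j = j0 then t else 0)"
            by (simp add: q'_def sum.distrib)
          also have "(\<Sum>i\<in>I. if i = i0 \<and> j = j0 then t else 0) = (if j = j0 then t else 0)"
            using i0 fin by (auto simp: sum.delta)
          finally show "(\<Sum>i\<in>I. q' i j) \<le> d j" using q j by (auto simp: sol_def d'_def)
        qed
        then show ?thesis by blast
      qed
    qed
  qed
qed


definition alg :: "'a set \<Rightarrow> 'a set set \<Rightarrow> bool" where
  "alg X A \<longleftrightarrow> X \<in> A \<and> (\<forall>a\<in>A. a \<subseteq> X) \<and> (\<forall>a\<in>A. X - a \<in> A) \<and> (\<forall>a\<in>A. \<forall>b\<in>A. a \<union> b \<in> A)"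

definition chg :: "'a set \<Rightarrow> 'a set set \<Rightarrow> ('a set \<Rightarrow> real) \<Rightarrow> bool" where
  "chg X A m \<longleftrightarrow> (\<forall>a\<in>A. 0 \<le> m a) \<and> m X = 1 \<and> (\<forall>a\<in>A. \<forall>b\<in>A. a \<inter> b = {} \<longrightarrow> m (a \<union> b) = m a + m b)"

lemma alg_X: "alg X A \<Longrightarrow> X \<in> A" unfolding alg_def by blast
lemma alg_sub: "alg X A \<Longrightarrow> a \<in> A \<Longrightarrow> a \<subseteq> X" unfolding alg_def by blast
lemma alg_compl: "alg X A \<Longrightarrow> a \<in> A \<Longrightarrow> X - a \<in> A" unfolding alg_def by blast
lemma alg_un: "alg X A \<Longrightarrow> a \<in> A \<Longrightarrow> b \<in> A \<Longrightarrow> a \<union> b \<in> A" unfolding alg_def by blast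
lemma chg_nn: "chg X A m \<Longrightarrow> a \<in> A \<Longrightarrow> 0 \<le> m a" unfolding chg_def by blast
lemma chg_X: "chg X A m \<Longrightarrow> m X = 1" unfolding chg_def by blast
lemma chg_add: "chg X A m \<Longrightarrow> a \<in> A \<Longrightarrow> b \<in> A \<Longrightarrow> a \<inter> b = {} \<Longrightarrow> m (a \<union> b) = m a + m b"
  unfolding chg_def by blast

lemma alg_empty: assumes "alg X A" shows "{} \<in> A"
proof -
  have "X - X \<in> A" by (rule alg_compl[OF assms alg_X[OF assms]])
  then show ?thesis by simp
qed

lemma alg_int: assumes "alg X A" "a \<in> A" "b \<in> A" shows "a \<inter> b \<in> A"
proof -
  have "a \<subseteq> X" "b \<subseteq> X" using alg_sub[OF assms(1)] assms(2,3) by auto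
  then have e: "a \<inter> b = X - ((X - a) \<union> (X - b))" by blast
  have "X - a \<in> A" "X - b \<in> A" using alg_compl[OF assms(1)] assms(2,3) by auto
  then have "(X - a) \<union> (X - b) \<in> A" using alg_un[OF assms(1)] by blast
  then have "X - ((X - a) \<union> (X - b)) \<in> A" by (rule alg_compl[OF assms(1)])
  then show ?thesis using e by simp
qed

lemma alg_diff: assumes "alg X A" "a \<in> A" "b \<in> A" shows "a - b \<in> A"
proof -
  have "a \<subseteq> X" using alg_sub[OF assms(1,2)] .
  then have e: "a - b = a \<inter> (X - b)" by blast
  have "X - b \<in> A" by (rule alg_compl[OF assms(1,3)])
  then have "a \<inter> (X - b) \<in> A" by (rule alg_int[OF assms(1,2)])
  then show ?thesis using e by simp
qed

lemma chg_empty: assumes "alg X A" "chg X A m" shows "m {} = 0"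
proof -
  have "m (X \<union> {}) = m X + m {}" using assms(2) alg_X[OF assms(1)] alg_empty[OF assms(1)] by (rule chg_add) simp
  then show ?thesis by simp
qed

lemma chg_mono: assumes "alg X A" "chg X A m" "a \<in> A" "b \<in> A" "a \<subseteq> b" shows "m a \<le> m b"
proof -
  have e: "b = a \<union> (b - a)" using assms by blast
  have d: "b - a \<in> A" by (rule alg_diff[OF assms(1,4,3)])
  have "m (a \<union> (b - a)) = m a + m (b - a)" using assms(2,3) d by (rule chg_add) blast
  moreover have "0 \<le> m (b - a)" using assms(2) d by (rule chg_nn)
  ultimately show ?thesis using e by simp
qed

lemma chg_compl: assumes "alg X A" "chg X A m" "a \<in> A" shows "m (X - a) = 1 - m a"
proof -
  have e: "X = a \<union> (X - a)" using alg_sub[OF assms(1,3)] by blast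
  have d: "X - a \<in> A" by (rule alg_compl[OF assms(1,3)])
  have "m (a \<union> (X - a)) = m a + m (X - a)" using assms(2,3) d by (rule chg_add) blast
  then show ?thesis using e chg_X[OF assms(2)] by simp
qed

lemma chg_sum:
  assumes "alg X A" "chg X A m" "finite C" "C \<subseteq> A" "\<forall>c\<in>C. \<forall>c'\<in>C. c \<noteq> c' \<longrightarrow> c \<inter> c' = {}"
  shows "\<Union>C \<in> A \<and> m (\<Union>C) = sum m C"
  using assms(3-5)
proof (induction C rule: finite_induct)
  case empty
  then show ?case using alg_empty[OF assms(1)] chg_empty[OF assms(1,2)] by simp
next
  case (insert c C)
  have CA: "C \<subseteq> A" using insert.prems(1) by blast
  have Cd: "\<forall>c\<in>C. \<forall>c'\<in>C. c \<noteq> c' \<longrightarrow> c \<inter> c' = {}" using insert.prems(2) by blast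
  have IH: "\<Union>C \<in> A" "m (\<Union>C) = sum m C" using insert.IH[OF CA Cd] by auto
  have c: "c \<in> A" using insert.prems(1) by blast
  have "\<forall>c'\<in>C. c \<inter> c' = {}"
  proof
    fix c' assume "c' \<in> C"
    then have "c \<noteq> c'" using insert.hyps(2) by blast
    then show "c \<inter> c' = {}" using insert.prems(2) \<open>c' \<in> C\<close> by simp
  qed
  then have disj: "c \<inter> \<Union>C = {}" by blast
  have U: "\<Union>(insert c C) = c \<union> \<Union>C" by simp
  have A1: "c \<union> \<Union>C \<in> A" using assms(1) c IH(1) by (rule alg_un)
  have A2: "m (c \<union> \<Union>C) = m c + m (\<Union>C)" using assms(2) c IH(1) disj by (rule chg_add)
  have S: "sum m (insert c C) = m c + sum m C" using insert.hyps(1,2) by (rule sum.insert)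
  show ?case unfolding U S
  proof (rule conjI)
    show "c \<union> \<Union>C \<in> A" by (rule A1)
    show "m (c \<union> \<Union>C) = m c + sum m C" using A2 IH(2) by linarith
  qed
qed

definition cell :: "'a set set \<Rightarrow> 'a set \<Rightarrow> 'a \<Rightarrow> 'a set" where
  "cell F X x = {y\<in>X. \<forall>a\<in>F. (y \<in> a \<longleftrightarrow> x \<in> a)}"

definition cells :: "'a set set \<Rightarrow> 'a set \<Rightarrow> 'a set set" where
  "cells F X = cell F X ` X"

lemma cell_insert: "cell (insert a F) X x = cell F X x \<inter> (if x \<in> a then a else X - a)"
  by (auto simp: cell_def)

lemma cell_in_alg:
  assumes "alg X A" "finite F" "F \<subseteq> A"
  shows "cell F X x \<in> A"
  using assms(2,3)
proof (induction F rule: finite_induct)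
  case empty
  have "cell {} X x = X" by (auto simp: cell_def)
  then show ?case using alg_X[OF assms(1)] by simp
next
  case (insert a F)
  have c: "cell F X x \<in> A" using insert.IH insert.prems by simp
  have "(if x \<in> a then a else X - a) \<in> A" using insert.prems assms(1) by (auto simp: alg_compl)
  then show ?case unfolding cell_insert using alg_int[OF assms(1) c] by blast
qed

lemma finite_cells: assumes "finite F" shows "finite (cells F X)"
proof -
  define g where "g = (\<lambda>T. {y\<in>X. \<forall>a\<in>F. (y \<in> a \<longleftrightarrow> a \<in> T)})"
  have "cell F X x = g {a\<in>F. x \<in> a}" for x by (auto simp: cell_def g_def)
  then have "cells F X \<subseteq> g ` Pow F" unfolding cells_def by auto
  then show ?thesis using assms by (meson finite_Pow_iff finite_imageI finite_subset)
qed

lemma cell_self: "x \<in> X \<Longrightarrow> x \<in> cell F X x" by (auto simp: cell_def)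

lemma cell_sub: "cell F X x \<subseteq> X" by (auto simp: cell_def)

lemma cell_eq: "y \<in> cell F X x \<Longrightarrow> cell F X y = cell F X x" by (auto simp: cell_def)

lemma cells_disj: assumes "c \<in> cells F X" "c' \<in> cells F X" "c \<noteq> c'" shows "c \<inter> c' = {}"
proof (rule ccontr)
  assume "c \<inter> c' \<noteq> {}"
  then obtain y where y: "y \<in> c" "y \<in> c'" by blast
  obtain x where x: "c = cell F X x" "x \<in> X" using assms(1) unfolding cells_def by (erule imageE)
  obtain x' where x': "c' = cell F X x'" "x' \<in> X" using assms(2) unfolding cells_def by (erule imageE)
  have "cell F X y = cell F X x" using y(1) unfolding x(1) by (rule cell_eq)
  moreover have "cell F X y = cell F X x'" using y(2) unfolding x'(1) by (rule cell_eq)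
  ultimately show False using assms(3) x(1) x'(1) by simp
qed

lemma cells_union: "\<Union>(cells F X) = X"
proof
  show "\<Union>(cells F X) \<subseteq> X"
  proof
    fix y assume "y \<in> \<Union>(cells F X)"
    then obtain c where "c \<in> cells F X" "y \<in> c" by blast
    obtain x where "c = cell F X x" "x \<in> X" using \<open>c \<in> cells F X\<close> unfolding cells_def by (erule imageE)
    then have "c \<subseteq> X" using cell_sub[of F X x] by simp
    then show "y \<in> X" using \<open>y \<in> c\<close> by (rule subsetD)
  qed
  show "X \<subseteq> \<Union>(cells F X)"
  proof
    fix x assume x: "x \<in> X"
    have "cell F X x \<in> cells F X" using x unfolding cells_def by (rule imageI)
    then show "x \<in> \<Union>(cells F X)" using cell_self[OF x] by (rule UnionI)
  qed
qed

lemma cells_sub: assumes "c \<in> cells F X" shows "c \<subseteq> X"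
proof -
  obtain x where "c = cell F X x" "x \<in> X" using assms unfolding cells_def by (erule imageE)
  then show ?thesis using cell_sub by simp
qed

lemma cell_dich: assumes "a \<in> F" "c \<in> cells F X" shows "c \<subseteq> a \<or> c \<inter> a = {}"
proof -
  obtain x where c: "c = cell F X x" "x \<in> X" using assms(2) unfolding cells_def by (erule imageE)
  show ?thesis
  proof (cases "x \<in> a")
    case True
    then have "c \<subseteq> a" unfolding c(1) cell_def using assms(1) by blast
    then show ?thesis by blast
  next
    case False
    then have "c \<inter> a = {}" unfolding c(1) cell_def using assms(1) by blast
    then show ?thesis by blast
  qed
qed

lemma cells_union_sub: assumes "a \<in> F" "a \<subseteq> X" shows "\<Union>{c\<in>cells F X. c \<subseteq> a} = a"
proof
  show "\<Union>{c\<in>cells F X. c \<subseteq> a} \<subseteq> a" by blast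
  show "a \<subseteq> \<Union>{c\<in>cells F X. c \<subseteq> a}"
  proof
    fix x assume x: "x \<in> a"
    then have "x \<in> X" using assms by blast
    moreover have "cell F X x \<subseteq> a" using x assms(1) by (auto simp: cell_def)
    moreover have "cell F X x \<in> cells F X" using \<open>x \<in> X\<close> unfolding cells_def by (rule imageI)
    moreover have "x \<in> cell F X x" using \<open>x \<in> X\<close> by (rule cell_self)
    ultimately show "x \<in> \<Union>{c\<in>cells F X. c \<subseteq> a}" by blast
  qed
qed


lemma FL:
  fixes X :: "'a set" and Y :: "'b set" and g :: "'a \<Rightarrow> 'b"
  assumes aX: "alg X AA" "chg X AA m1" and aY: "alg Y DD" "chg Y DD \<rho>" and gX: "\<forall>x\<in>X. g x \<in> Y"
  and compat: "\<forall>a\<in>AA. \<forall>D\<in>DD. a \<subseteq> g -` D \<longrightarrow> m1 a \<le> \<rho> D"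
  and F: "finite F1" "F1 \<subseteq> AA" "finite F2" "F2 \<subseteq> DD"
  shows "\<exists>m::'a set \<Rightarrow> real. (\<forall>S. 0 \<le> m S \<and> m S \<le> 1) \<and> (\<forall>S T. S \<inter> T = {} \<longrightarrow> m (S \<union> T) = m S + m T)
        \<and> m X = 1 \<and> (\<forall>a\<in>F1. m a = m1 a) \<and> (\<forall>D\<in>F2. m (g -` D \<inter> X) = \<rho> D)"
proof -
  define I where "I = cells F1 X"
  define J where "J = cells F2 Y"
  have finI: "finite I" unfolding I_def using F(1) by (rule finite_cells)
  have finJ: "finite J" unfolding J_def using F(3) by (rule finite_cells)
  have IA: "I \<subseteq> AA" unfolding I_def cells_def using cell_in_alg[OF aX(1) F(1,2)] by blast
  have JD: "J \<subseteq> DD" unfolding J_def cells_def using cell_in_alg[OF aY(1) F(3,4)] by blast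
  have disjI: "\<forall>c\<in>I. \<forall>c'\<in>I. c \<noteq> c' \<longrightarrow> c \<inter> c' = {}" unfolding I_def using cells_disj by blast
  have disjJ: "\<forall>c\<in>J. \<forall>c'\<in>J. c \<noteq> c' \<longrightarrow> c \<inter> c' = {}" unfolding J_def using cells_disj by blast
  have sumI: "\<Union>S \<in> AA \<and> m1 (\<Union>S) = sum m1 S" if "S \<subseteq> I" for S
  proof -
    have f: "finite S" using that finI by (rule finite_subset)
    have s: "S \<subseteq> AA" using that IA by (rule subset_trans)
    have d: "\<forall>c\<in>S. \<forall>c'\<in>S. c \<noteq> c' \<longrightarrow> c \<inter> c' = {}" using that disjI by (meson subsetD)
    show ?thesis by (rule chg_sum[OF aX f s d])
  qed
  have sumJ: "\<Union>S \<in> DD \<and> \<rho> (\<Union>S) = sum \<rho> S" if "S \<subseteq> J" for S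
  proof -
    have f: "finite S" using that finJ by (rule finite_subset)
    have s: "S \<subseteq> DD" using that JD by (rule subset_trans)
    have d: "\<forall>c\<in>S. \<forall>c'\<in>S. c \<noteq> c' \<longrightarrow> c \<inter> c' = {}" using that disjJ by (meson subsetD)
    show ?thesis by (rule chg_sum[OF aY f s d])
  qed
  have tI: "sum m1 I = 1" using sumI[of I] cells_union[of F1 X] chg_X[OF aX(2)] unfolding I_def by simp
  have tJ: "sum \<rho> J = 1" using sumJ[of J] cells_union[of F2 Y] chg_X[OF aY(2)] unfolding J_def by simp
  define E where "E = (\<lambda>c1 c2. \<exists>x. x \<in> c1 \<and> g x \<in> c2)"
  have h: "hall E I J m1 \<rho>"
    unfolding hall_def
  proof (intro allI impI)
    fix S assume S: "S \<subseteq> I"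
    define N where "N = nb E J S"
    have NJ: "N \<subseteq> J" by (auto simp: N_def nb_def)
    have sub: "\<Union>S \<subseteq> g -` \<Union>N"
    proof
      fix x assume "x \<in> \<Union>S"
      then obtain c1 where c1: "c1 \<in> S" "x \<in> c1" by blast
      have "c1 \<in> cells F1 X" using c1(1) S unfolding I_def by blast
      then have "c1 \<subseteq> X" by (rule cells_sub)
      then have xX: "x \<in> X" using c1 by blast
      then have gx: "g x \<in> Y" using gX by blast
      have c2: "cell F2 Y (g x) \<in> J" unfolding J_def cells_def using gx by (rule imageI)
      have gx2: "g x \<in> cell F2 Y (g x)" using gx by (rule cell_self)
      have "E c1 (cell F2 Y (g x))" unfolding E_def using c1(2) gx2 by blast
      then have "cell F2 Y (g x) \<in> N" unfolding N_def nb_def using c2 c1(1) by blast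
      then show "x \<in> g -` \<Union>N" using gx2 by blast
    qed
    have "m1 (\<Union>S) \<le> \<rho> (\<Union>N)" using compat sumI[OF S] sumJ[OF NJ] sub by blast
    then show "sum m1 S \<le> sum \<rho> (nb E J S)" using sumI[OF S] sumJ[OF NJ] N_def by simp
  qed
  have nnI: "\<forall>i\<in>I. 0 \<le> m1 i" using IA chg_nn[OF aX(2)] by blast
  have nnJ: "\<forall>j\<in>J. 0 \<le> \<rho> j" using JD chg_nn[OF aY(2)] by blast
  obtain q where q: "sol E I J m1 \<rho> q" using SD[OF finI finJ nnI nnJ h] by blast
  have q0: "\<And>i j. 0 \<le> q i j" and qE: "\<And>i j. \<not> E i j \<Longrightarrow> q i j = 0"
    and qrow: "\<And>i. i \<in> I \<Longrightarrow> sum (q i) J = m1 i" and qcol: "\<And>j. j \<in> J \<Longrightarrow> (\<Sum>i\<in>I. q i j) \<le> \<rho> j"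
    using q unfolding sol_def by auto
  have tot: "(\<Sum>i\<in>I. \<Sum>j\<in>J. q i j) = 1" using qrow tI by simp
  have qcol_eq: "(\<Sum>i\<in>I. q i j) = \<rho> j" if "j \<in> J" for j
  proof -
    have "(\<Sum>j\<in>J. \<rho> j - (\<Sum>i\<in>I. q i j)) = sum \<rho> J - (\<Sum>j\<in>J. \<Sum>i\<in>I. q i j)"
      by (simp add: sum_subtractf)
    also have "(\<Sum>j\<in>J. \<Sum>i\<in>I. q i j) = (\<Sum>i\<in>I. \<Sum>j\<in>J. q i j)" by (rule sum.swap)
    finally have "(\<Sum>j\<in>J. \<rho> j - (\<Sum>i\<in>I. q i j)) = 0" using tot tJ by simp
    moreover have "(\<Sum>j\<in>J. \<rho> j - (\<Sum>i\<in>I. q i j)) = 0 \<longleftrightarrow> (\<forall>j\<in>J. \<rho> j - (\<Sum>i\<in>I. q i j) = 0)"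
      by (rule sum_nonneg_eq_0_iff[OF finJ]) (use qcol in simp)
    ultimately have "\<forall>j\<in>J. \<rho> j - (\<Sum>i\<in>I. q i j) = 0" by blast
    then show ?thesis using that by simp
  qed
  define pt where "pt = (\<lambda>c1 c2. SOME x. x \<in> c1 \<and> g x \<in> c2)"
  have ptE: "pt c1 c2 \<in> c1 \<and> g (pt c1 c2) \<in> c2" if "E c1 c2" for c1 c2
    unfolding pt_def using that unfolding E_def by (rule someI_ex)
  define m where "m = (\<lambda>T. \<Sum>c1\<in>I. \<Sum>c2\<in>J. q c1 c2 * (if pt c1 c2 \<in> T then 1 else 0))"
  have mP: "m T = (\<Sum>c1\<in>I. \<Sum>c2\<in>J. q c1 c2 * (if P c1 c2 then 1 else 0))"
    if "\<And>c1 c2. c1 \<in> I \<Longrightarrow> c2 \<in> J \<Longrightarrow> E c1 c2 \<Longrightarrow> (pt c1 c2 \<in> T \<longleftrightarrow> P c1 c2)" for T P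
    unfolding m_def
  proof (intro sum.cong refl)
    fix c1 c2 assume "c1 \<in> I" "c2 \<in> J"
    then show "q c1 c2 * (if pt c1 c2 \<in> T then 1 else 0) = q c1 c2 * (if P c1 c2 then 1 else 0)"
      using that[of c1 c2] qE[of c1 c2] by (cases "E c1 c2") auto
  qed
  have ptX: "pt c1 c2 \<in> X" if "c1 \<in> I" "E c1 c2" for c1 c2
  proof -
    have "c1 \<subseteq> X" using that(1) unfolding I_def by (rule cells_sub)
    then show ?thesis using ptE[OF that(2)] by blast
  qed
  show ?thesis
  proof (intro exI[of _ m] conjI allI impI ballI)
    fix S
    show "0 \<le> m S" unfolding m_def using q0 by (intro sum_nonneg) auto
    have "m S \<le> (\<Sum>c1\<in>I. \<Sum>c2\<in>J. q c1 c2)" unfolding m_def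
      using q0 by (intro sum_mono) auto
    then show "m S \<le> 1" using tot by simp
  next
    fix S T :: "'a set" assume ST: "S \<inter> T = {}"
    have "m (S \<union> T) = (\<Sum>c1\<in>I. \<Sum>c2\<in>J. q c1 c2 * (if pt c1 c2 \<in> S then 1 else 0) + q c1 c2 * (if pt c1 c2 \<in> T then 1 else 0))"
      unfolding m_def
    proof (intro sum.cong refl)
      fix c1 c2
      show "q c1 c2 * (if pt c1 c2 \<in> S \<union> T then 1 else 0) = q c1 c2 * (if pt c1 c2 \<in> S then 1 else 0) + q c1 c2 * (if pt c1 c2 \<in> T then 1 else 0)"
        using ST by auto
    qed
    also have "\<dots> = m S + m T" unfolding m_def by (simp add: sum.distrib)
    finally show "m (S \<union> T) = m S + m T" .
  next
    have "m X = (\<Sum>c1\<in>I. \<Sum>c2\<in>J. q c1 c2 * (if True then 1 else 0))"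
      by (rule mP) (use ptX in auto)
    then show "m X = 1" using tot by simp
  next
    fix a assume a: "a \<in> F1"
    have aX': "a \<subseteq> X" using a F(2) alg_sub[OF aX(1)] by blast
    have "m a = (\<Sum>c1\<in>I. \<Sum>c2\<in>J. q c1 c2 * (if c1 \<subseteq> a then 1 else 0))"
    proof (rule mP)
      fix c1 c2 assume c: "c1 \<in> I" "c2 \<in> J" "E c1 c2"
      have "c1 \<subseteq> a \<or> c1 \<inter> a = {}" using a c(1) unfolding I_def by (rule cell_dich)
      then show "pt c1 c2 \<in> a \<longleftrightarrow> c1 \<subseteq> a" using ptE[OF c(3)] by blast
    qed
    also have "\<dots> = (\<Sum>c1\<in>I. if c1 \<subseteq> a then m1 c1 else 0)"
    proof (rule sum.cong[OF refl])
      fix c1 assume "c1 \<in> I"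
      then show "(\<Sum>c2\<in>J. q c1 c2 * (if c1 \<subseteq> a then 1 else 0)) = (if c1 \<subseteq> a then m1 c1 else 0)"
        using qrow by simp
    qed
    also have "\<dots> = sum m1 {c1\<in>I. c1 \<subseteq> a}" using finI by (simp add: sum.inter_filter)
    also have "\<dots> = m1 (\<Union>{c1\<in>I. c1 \<subseteq> a})" using sumI[of "{c1\<in>I. c1 \<subseteq> a}"] by simp
    also have "\<Union>{c1\<in>I. c1 \<subseteq> a} = a" unfolding I_def using a aX' by (rule cells_union_sub)
    finally show "m a = m1 a" .
  next
    fix D assume D: "D \<in> F2"
    have DY: "D \<subseteq> Y" using D F(4) alg_sub[OF aY(1)] by blast
    have "m (g -` D \<inter> X) = (\<Sum>c1\<in>I. \<Sum>c2\<in>J. q c1 c2 * (if c2 \<subseteq> D then 1 else 0))"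
    proof (rule mP)
      fix c1 c2 assume c: "c1 \<in> I" "c2 \<in> J" "E c1 c2"
      have "c2 \<subseteq> D \<or> c2 \<inter> D = {}" using D c(2) unfolding J_def by (rule cell_dich)
      then show "pt c1 c2 \<in> g -` D \<inter> X \<longleftrightarrow> c2 \<subseteq> D" using ptE[OF c(3)] ptX[OF c(1,3)] by blast
    qed
    also have "\<dots> = (\<Sum>c2\<in>J. \<Sum>c1\<in>I. q c1 c2 * (if c2 \<subseteq> D then 1 else 0))" by (rule sum.swap)
    also have "\<dots> = (\<Sum>c2\<in>J. if c2 \<subseteq> D then \<rho> c2 else 0)"
    proof (rule sum.cong[OF refl])
      fix c2 assume "c2 \<in> J"
      then show "(\<Sum>c1\<in>I. q c1 c2 * (if c2 \<subseteq> D then 1 else 0)) = (if c2 \<subseteq> D then \<rho> c2 else 0)"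
        using qcol_eq by simp
    qed
    also have "\<dots> = sum \<rho> {c2\<in>J. c2 \<subseteq> D}" using finJ by (simp add: sum.inter_filter)
    also have "\<dots> = \<rho> (\<Union>{c2\<in>J. c2 \<subseteq> D})" using sumJ[of "{c2\<in>J. c2 \<subseteq> D}"] by simp
    also have "\<Union>{c2\<in>J. c2 \<subseteq> D} = D" unfolding J_def using D DY by (rule cells_union_sub)
    finally show "m (g -` D \<inter> X) = \<rho> D" .
  qed
qed

lemma amalg_from_FL:
  fixes X :: "'a set" and g :: "'a \<Rightarrow> 'b"
  assumes FL: "\<And>F1 F2. finite F1 \<Longrightarrow> F1 \<subseteq> AA \<Longrightarrow> finite F2 \<Longrightarrow> F2 \<subseteq> DD \<Longrightarrow>
     \<exists>m::'a set \<Rightarrow> real. (\<forall>S. 0 \<le> m S \<and> m S \<le> 1) \<and> (\<forall>S T. S \<inter> T = {} \<longrightarrow> m (S \<union> T) = m S + m T)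
        \<and> m X = 1 \<and> (\<forall>a\<in>F1. m a = m1 a) \<and> (\<forall>D\<in>F2. m (g -` D \<inter> X) = \<rho> D)"
  shows "\<exists>m::'a set \<Rightarrow> real. (\<forall>S. 0 \<le> m S \<and> m S \<le> 1) \<and> (\<forall>S T. S \<inter> T = {} \<longrightarrow> m (S \<union> T) = m S + m T)
        \<and> m X = 1 \<and> (\<forall>a\<in>AA. m a = m1 a) \<and> (\<forall>D\<in>DD. m (g -` D \<inter> X) = \<rho> D)"
proof -
  have cpt: "compact (PiE UNIV (\<lambda>_::'a set. {0..1::real}))"
    by (metis compactin_PiE euclidean_product_topology compact_Icc compactin_euclidean_iff)
  define Tadd where "Tadd = (\<lambda>(S::'a set,T). {m::'a set \<Rightarrow> real. S \<inter> T = {} \<longrightarrow> m (S \<union> T) = m S + m T})"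
  define TX where "TX = {m::'a set \<Rightarrow> real. m X = 1}"
  define Ta where "Ta = (\<lambda>a. {m::'a set \<Rightarrow> real. m a = m1 a})"
  define TD where "TD = (\<lambda>D. {m::'a set \<Rightarrow> real. m (g -` D \<inter> X) = \<rho> D})"
  define FF where "FF = Tadd ` UNIV \<union> {TX} \<union> Ta ` AA \<union> TD ` DD"
  have cl: "closed T" if "T \<in> FF" for T
  proof -
    have c: "continuous_on UNIV (\<lambda>m::'a set \<Rightarrow> real. m S)" for S by simp
    have "closed (Tadd p)" for p
    proof (cases p)
      case (Pair S T)
      show ?thesis
      proof (cases "S \<inter> T = {}")
        case True
        then have "Tadd p = {m. m (S \<union> T) = m S + m T}" by (simp add: Tadd_def Pair)
        then show ?thesis by (simp add: closed_Collect_eq continuous_intros)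
      next
        case False
        then have "Tadd p = UNIV" by (simp add: Tadd_def Pair)
        then show ?thesis by simp
      qed
    qed
    moreover have "closed TX" unfolding TX_def by (simp add: closed_Collect_eq)
    moreover have "closed (Ta a)" for a unfolding Ta_def by (simp add: closed_Collect_eq)
    moreover have "closed (TD a)" for a unfolding TD_def by (simp add: closed_Collect_eq)
    ultimately show ?thesis using that unfolding FF_def by blast
  qed
  have fin: "PiE UNIV (\<lambda>_. {0..1}) \<inter> \<Inter>F' \<noteq> {}" if "finite F'" "F' \<subseteq> FF" for F'
  proof -
    have "F' \<inter> Ta ` AA \<subseteq> Ta ` AA" by blast
    moreover have "finite (F' \<inter> Ta ` AA)" using that by simp
    ultimately obtain F1 where F1: "F1 \<subseteq> AA" "finite F1" "F' \<inter> Ta ` AA = Ta ` F1"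
      by (meson finite_subset_image)
    have "F' \<inter> TD ` DD \<subseteq> TD ` DD" by blast
    moreover have "finite (F' \<inter> TD ` DD)" using that by simp
    ultimately obtain F2 where F2: "F2 \<subseteq> DD" "finite F2" "F' \<inter> TD ` DD = TD ` F2"
      by (meson finite_subset_image)
    obtain m where m: "(\<forall>S. 0 \<le> m S \<and> m S \<le> 1)" "(\<forall>S T. S \<inter> T = {} \<longrightarrow> m (S \<union> T) = m S + m T)"
        "m X = 1" "(\<forall>a\<in>F1. m a = m1 a)" "(\<forall>D\<in>F2. m (g -` D \<inter> X) = \<rho> D)"
      using FL[OF F1(2,1) F2(2,1)] by blast
    have "m \<in> PiE UNIV (\<lambda>_. {0..1})" using m(1) by auto
    moreover have "m \<in> T" if TF: "T \<in> F'" for T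
    proof -
      have "T \<in> FF" using TF \<open>F' \<subseteq> FF\<close> by blast
      then consider p where "T = Tadd p" | "T = TX" | "T \<in> F' \<inter> Ta ` AA" | "T \<in> F' \<inter> TD ` DD"
        unfolding FF_def using TF by blast
      then show ?thesis
      proof cases
        case 1 then show ?thesis using m(2) by (auto simp: Tadd_def split: prod.splits)
      next
        case 2 then show ?thesis using m(3) by (simp add: TX_def)
      next
        case 3 then have "T \<in> Ta ` F1" using F1(3) by blast
        then show ?thesis using m(4) by (auto simp: Ta_def)
      next
        case 4 then have "T \<in> TD ` F2" using F2(3) by blast
        then show ?thesis using m(5) by (auto simp: TD_def)
      qed
    qed
    ultimately show ?thesis by blast
  qed
  have "PiE UNIV (\<lambda>_. {0..1}) \<inter> \<Inter>FF \<noteq> {}"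
    by (rule compact_imp_fip[OF cpt cl fin]) auto
  then obtain m where m: "m \<in> PiE UNIV (\<lambda>_. {0..1::real})" "m \<in> \<Inter>FF" by blast
  show ?thesis
  proof (intro exI[of _ m] conjI allI impI ballI)
    fix S show "0 \<le> m S" "m S \<le> 1" using m(1) by auto
  next
    fix S T :: "'a set" assume ST: "S \<inter> T = {}"
    have "Tadd (S,T) \<in> FF" unfolding FF_def by blast
    then have "m \<in> Tadd (S,T)" using m(2) by blast
    then show "m (S \<union> T) = m S + m T" using ST by (simp add: Tadd_def)
  next
    have "TX \<in> FF" unfolding FF_def by blast
    then show "m X = 1" using m(2) unfolding TX_def by blast
  next
    fix a assume "a \<in> AA" then have "Ta a \<in> FF" unfolding FF_def by blast
    then show "m a = m1 a" using m(2) unfolding Ta_def by blast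
  next
    fix D assume "D \<in> DD" then have "TD D \<in> FF" unfolding FF_def by blast
    then show "m (g -` D \<inter> X) = \<rho> D" using m(2) unfolding TD_def by blast
  qed
qed

lemma amalg:
  fixes X :: "'a set" and Y :: "'b set" and g :: "'a \<Rightarrow> 'b"
  assumes aX: "alg X AA" "chg X AA m1" and aY: "alg Y DD" "chg Y DD \<rho>" and gX: "\<forall>x\<in>X. g x \<in> Y"
  and compat: "\<forall>a\<in>AA. \<forall>D\<in>DD. a \<subseteq> g -` D \<longrightarrow> m1 a \<le> \<rho> D"
  shows "\<exists>m::'a set \<Rightarrow> real. (\<forall>S. 0 \<le> m S \<and> m S \<le> 1) \<and> (\<forall>S T. S \<inter> T = {} \<longrightarrow> m (S \<union> T) = m S + m T)
        \<and> m X = 1 \<and> (\<forall>a\<in>AA. m a = m1 a) \<and> (\<forall>D\<in>DD. m (g -` D \<inter> X) = \<rho> D)"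
  by (rule amalg_from_FL[OF FL[OF aX aY gX compat]])



fun rnt :: "(nat \<Rightarrow> nat) \<Rightarrow> 'f trm \<Rightarrow> 'f trm" where
  "rnt \<rho> (Var i) = Var (\<rho> i)"
| "rnt \<rho> (Fn g ts) = Fn g (map (rnt \<rho>) ts)"

fun rn :: "(nat \<Rightarrow> nat) \<Rightarrow> ('f, 'r) form \<Rightarrow> ('f, 'r) form" where
  "rn \<rho> Bot = Bot"
| "rn \<rho> (Equ s t) = Equ (rnt \<rho> s) (rnt \<rho> t)"
| "rn \<rho> (Rl r ts) = Rl r (map (rnt \<rho>) ts)"
| "rn \<rho> (Neg p) = Neg (rn \<rho> p)"
| "rn \<rho> (Conj p q) = Conj (rn \<rho> p) (rn \<rho> q)"
| "rn \<rho> (Exi i p) = (let j = Suc (Max (insert 0 (\<rho> ` (fv p - {i})))) in Exi j (rn (\<rho>(i := j)) p))"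

lemma finite_fvt: "finite (fvt t)"
  by (induction t) auto

lemma finite_fv: "finite (fv p)"
  by (induction p) (auto simp: finite_fvt)

lemma evt_rnt: "evt F e (rnt \<rho> t) = evt F (e \<circ> \<rho>) t"
  by (induction t) (auto cong: map_cong)

lemma fvt_rnt: "fvt (rnt \<rho> t) = \<rho> ` fvt t"
  by (induction t) auto

lemma evt_cong: "(\<forall>i\<in>fvt t. e i = e' i) \<Longrightarrow> evt F e t = evt F e' t"
  by (induction t) (auto cong: map_cong)

lemma sat_cong: "(\<forall>i\<in>fv p. e i = e' i) \<Longrightarrow> sat F R e p = sat F R e' p"
proof (induction p arbitrary: e e')
  case (Equ s t) then show ?case using evt_cong[of s e e' F] evt_cong[of t e e' F] by simp
next
  case (Rl r ts)
  then have "map (evt F e) ts = map (evt F e') ts"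
    by (intro map_cong refl evt_cong) auto
  then show ?case by (simp only: sat.simps)
next
  case (Conj p q)
  have "sat F R e p = sat F R e' p" using Conj.prems by (intro Conj.IH(1)) auto
  moreover have "sat F R e q = sat F R e' q" using Conj.prems by (intro Conj.IH(2)) auto
  ultimately show ?case by simp
next
  case (Exi i p)
  have "sat F R (e(i := a)) p = sat F R (e'(i := a)) p" for a
  proof -
    have "\<forall>k\<in>fv p. (e(i := a)) k = (e'(i := a)) k" using Exi.prems by auto
    then show ?thesis by (rule Exi.IH)
  qed
  then show ?case by simp
qed auto

lemma sat_rn: "sat F R e (rn \<rho> p) = sat F R (e \<circ> \<rho>) p"
proof (induction p arbitrary: \<rho> e)
  case (Equ s t) then show ?case by (simp add: evt_rnt comp_def)
next
  case (Rl r ts) then show ?case by (simp add: evt_rnt comp_def)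
next
  case (Exi i p)
  define j where "j = Suc (Max (insert 0 (\<rho> ` (fv p - {i}))))"
  have fin: "finite (insert 0 (\<rho> ` (fv p - {i})))" using finite_fv by auto
  have jne: "\<rho> k \<noteq> j" if "k \<in> fv p" "k \<noteq> i" for k
  proof -
    have "\<rho> k \<le> Max (insert 0 (\<rho> ` (fv p - {i})))" using fin that by (intro Max_ge) auto
    then show ?thesis unfolding j_def by simp
  qed
  have "sat F R e (rn \<rho> (Exi i p)) = (\<exists>a. sat F R (e(j := a)) (rn (\<rho>(i := j)) p))"
    by (simp add: j_def Let_def)
  also have "\<dots> = (\<exists>a. sat F R ((e(j := a)) \<circ> (\<rho>(i := j))) p)"
    using Exi.IH by presburger
  also have "\<dots> = (\<exists>a. sat F R ((e \<circ> \<rho>)(i := a)) p)"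
  proof -
    have "sat F R ((e(j := a)) \<circ> (\<rho>(i := j))) p = sat F R ((e \<circ> \<rho>)(i := a)) p" for a
      by (rule sat_cong) (auto simp: jne)
    then show ?thesis by simp
  qed
  finally show ?case by (simp add: comp_def)
qed auto

lemma fv_rn: "fv (rn \<rho> p) \<subseteq> \<rho> ` fv p"
proof (induction p arbitrary: \<rho>)
  case (Equ s t) then show ?case by (auto simp: fvt_rnt)
next
  case (Rl r ts) then show ?case by (auto simp: fvt_rnt)
next
  case (Neg p) then show ?case by simp
next
  case (Conj p q)
  have a: "fv (rn \<rho> p) \<subseteq> \<rho> ` fv (Conj p q)" using Conj.IH(1)[of \<rho>] by auto
  have b: "fv (rn \<rho> q) \<subseteq> \<rho> ` fv (Conj p q)" using Conj.IH(2)[of \<rho>] by auto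
  show ?case using a b by simp
next
  case (Exi i p)
  define j where "j = Suc (Max (insert 0 (\<rho> ` (fv p - {i}))))"
  have "fv (rn \<rho> (Exi i p)) = fv (rn (\<rho>(i := j)) p) - {j}" by (simp add: j_def Let_def)
  also have "\<dots> \<subseteq> (\<rho>(i := j)) ` fv p - {j}" using Exi.IH by blast
  also have "\<dots> \<subseteq> \<rho> ` (fv p - {i})" by auto
  finally show ?case by simp
qed auto


lemma sat_env: "(\<forall>i\<in>fv \<phi>. e (\<rho> i) = ys ! i) \<Longrightarrow> sat F R e (rn \<rho> \<phi>) = sat F R (\<lambda>i. ys ! i) \<phi>"
  unfolding sat_rn by (rule sat_cong) auto

lemma defsetsE:
  fixes F :: "'f \<Rightarrow> 'u list \<Rightarrow> 'u" and R :: "'r \<Rightarrow> 'u list \<Rightarrow> bool"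
  assumes "S \<in> defsets F R p C"
  obtains \<phi> :: "('f, 'r) form" and ps where "set ps \<subseteq> C" "fv \<phi> \<subseteq> {..<p + length ps}"
    "S = {v. length v = p \<and> sat F R (\<lambda>i. (v @ ps) ! i) \<phi>}"
  using assms unfolding defsets_def by blast

lemma defsetsI:
  fixes \<phi> :: "('f, 'r) form" and F :: "'f \<Rightarrow> 'u list \<Rightarrow> 'u" and R :: "'r \<Rightarrow> 'u list \<Rightarrow> bool"
  assumes "set ps \<subseteq> C" "fv \<phi> \<subseteq> {..<p + length ps}"
    "S = {v. length v = p \<and> sat F R (\<lambda>i. (v @ ps) ! i) \<phi>}"
  shows "S \<in> defsets F R p C"
  using assms unfolding defsets_def by blast

lemma D_mono: "C \<subseteq> C' \<Longrightarrow> S \<in> defsets F R p C \<Longrightarrow> S \<in> defsets F R p C'"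
  unfolding defsets_def by blast

lemma D_sub: "S \<in> defsets F R p C \<Longrightarrow> S \<subseteq> {v. length v = p}"
  unfolding defsets_def by blast

lemma D_univ: "{v. length v = p} \<in> defsets F R p C"
proof (rule defsetsI[where ps = "[]" and \<phi> = "Neg Bot"])
qed auto

lemma D_compl:
  fixes F :: "'f \<Rightarrow> 'u list \<Rightarrow> 'u" and R :: "'r \<Rightarrow> 'u list \<Rightarrow> bool"
  assumes "S \<in> defsets F R p C" shows "{v. length v = p} - S \<in> defsets F R p C"
proof -
  obtain \<phi> :: "('f, 'r) form" and ps where h: "set ps \<subseteq> C" "fv \<phi> \<subseteq> {..<p + length ps}"
    "S = {v. length v = p \<and> sat F R (\<lambda>i. (v @ ps) ! i) \<phi>}" using assms by (rule defsetsE)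
  show ?thesis by (rule defsetsI[where ps = ps and \<phi> = "Neg \<phi>"]) (use h in auto)
qed

lemma D_int:
  fixes F :: "'f \<Rightarrow> 'u list \<Rightarrow> 'u" and R :: "'r \<Rightarrow> 'u list \<Rightarrow> bool"
  assumes "S1 \<in> defsets F R p C" "S2 \<in> defsets F R p C" shows "S1 \<inter> S2 \<in> defsets F R p C"
proof -
  obtain \<phi>1 :: "('f, 'r) form" and ps1 where h1: "set ps1 \<subseteq> C" "fv \<phi>1 \<subseteq> {..<p + length ps1}"
    "S1 = {v. length v = p \<and> sat F R (\<lambda>i. (v @ ps1) ! i) \<phi>1}" using assms(1) by (rule defsetsE)
  obtain \<phi>2 :: "('f, 'r) form" and ps2 where h2: "set ps2 \<subseteq> C" "fv \<phi>2 \<subseteq> {..<p + length ps2}"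
    "S2 = {v. length v = p \<and> sat F R (\<lambda>i. (v @ ps2) ! i) \<phi>2}" using assms(2) by (rule defsetsE)
  define \<rho> where "\<rho> = (\<lambda>i. if i < p then i else i + length ps1)"
  show ?thesis
  proof (rule defsetsI[where ps = "ps1 @ ps2" and \<phi> = "Conj \<phi>1 (rn \<rho> \<phi>2)"])
    show "set (ps1 @ ps2) \<subseteq> C" using h1 h2 by simp
    have "fv (rn \<rho> \<phi>2) \<subseteq> \<rho> ` fv \<phi>2" by (rule fv_rn)
    also have "\<dots> \<subseteq> {..<p + length (ps1 @ ps2)}" using h2(2) by (auto simp: \<rho>_def)
    finally show "fv (Conj \<phi>1 (rn \<rho> \<phi>2)) \<subseteq> {..<p + length (ps1 @ ps2)}" using h1(2) by auto
    have e1: "sat F R (\<lambda>i. (v @ ps1 @ ps2) ! i) \<phi>1 = sat F R (\<lambda>i. (v @ ps1) ! i) \<phi>1" if "length v = p" for v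
      by (rule sat_cong) (use h1(2) that in \<open>auto simp: nth_append\<close>)
    have e2: "sat F R (\<lambda>i. (v @ ps1 @ ps2) ! i) (rn \<rho> \<phi>2) = sat F R (\<lambda>i. (v @ ps2) ! i) \<phi>2" if "length v = p" for v
      by (rule sat_env) (use h2(2) that in \<open>auto simp: nth_append \<rho>_def\<close>)
    show "S1 \<inter> S2 = {v. length v = p \<and> sat F R (\<lambda>i. (v @ ps1 @ ps2) ! i) (Conj \<phi>1 (rn \<rho> \<phi>2))}"
      using e1 e2 h1(3) h2(3) by auto
  qed
qed

lemma D_pb:
  fixes F :: "'f \<Rightarrow> 'u list \<Rightarrow> 'u" and R :: "'r \<Rightarrow> 'u list \<Rightarrow> bool"
  assumes "S \<in> defsets F R p C" "\<forall>j<p. \<sigma> j < q"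
  shows "{w. length w = q \<and> map (\<lambda>j. w ! \<sigma> j) [0..<p] \<in> S} \<in> defsets F R q C"
proof -
  obtain \<phi> :: "('f, 'r) form" and ps where h: "set ps \<subseteq> C" "fv \<phi> \<subseteq> {..<p + length ps}"
    "S = {v. length v = p \<and> sat F R (\<lambda>i. (v @ ps) ! i) \<phi>}" using assms(1) by (rule defsetsE)
  define \<rho> where "\<rho> = (\<lambda>j. if j < p then \<sigma> j else q + (j - p))"
  show ?thesis
  proof (rule defsetsI[where ps = ps and \<phi> = "rn \<rho> \<phi>"])
    show "set ps \<subseteq> C" by (rule h(1))
    have "fv (rn \<rho> \<phi>) \<subseteq> \<rho> ` fv \<phi>" by (rule fv_rn)
    also have "\<dots> \<subseteq> {..<q + length ps}" using h(2) assms(2) by (auto simp: \<rho>_def)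
    finally show "fv (rn \<rho> \<phi>) \<subseteq> {..<q + length ps}" .
    have e: "sat F R (\<lambda>i. (w @ ps) ! i) (rn \<rho> \<phi>) = sat F R (\<lambda>i. (map (\<lambda>j. w ! \<sigma> j) [0..<p] @ ps) ! i) \<phi>"
      if "length w = q" for w
      by (rule sat_env) (use h(2) that assms(2) in \<open>auto simp: nth_append \<rho>_def\<close>)
    show "{w. length w = q \<and> map (\<lambda>j. w ! \<sigma> j) [0..<p] \<in> S} =
        {w. length w = q \<and> sat F R (\<lambda>i. (w @ ps) ! i) (rn \<rho> \<phi>)}"
      using e h(3) by auto
  qed
qed

lemma D_ex1:
  fixes F :: "'f \<Rightarrow> 'u list \<Rightarrow> 'u" and R :: "'r \<Rightarrow> 'u list \<Rightarrow> bool"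
  assumes "S \<in> defsets F R (Suc p) C"
  shows "{u. length u = p \<and> (\<exists>a. u @ [a] \<in> S)} \<in> defsets F R p C"
proof -
  obtain \<phi> :: "('f, 'r) form" and ps where h: "set ps \<subseteq> C" "fv \<phi> \<subseteq> {..<Suc p + length ps}"
    "S = {v. length v = Suc p \<and> sat F R (\<lambda>i. (v @ ps) ! i) \<phi>}" using assms(1) by (rule defsetsE)
  define l where "l = length ps"
  define \<rho> where "\<rho> = (\<lambda>j. if j < p then j else if j = p then p + l else j - 1)"
  show ?thesis
  proof (rule defsetsI[where ps = ps and \<phi> = "Exi (p + l) (rn \<rho> \<phi>)"])
    show "set ps \<subseteq> C" by (rule h(1))
    have "fv (rn \<rho> \<phi>) \<subseteq> \<rho> ` fv \<phi>" by (rule fv_rn)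
    also have "\<dots> \<subseteq> {..<p + l} \<union> {p + l}" using h(2) by (auto simp: \<rho>_def l_def)
    finally show "fv (Exi (p + l) (rn \<rho> \<phi>)) \<subseteq> {..<p + length ps}" by (auto simp: l_def)
    have e: "sat F R ((\<lambda>i. (u @ ps) ! i)(p + l := a)) (rn \<rho> \<phi>) = sat F R (\<lambda>i. ((u @ [a]) @ ps) ! i) \<phi>"
      if "length u = p" for u a
      by (rule sat_env) (use h(2) that in \<open>auto simp: nth_append \<rho>_def l_def\<close>)
    show "{u. length u = p \<and> (\<exists>a. u @ [a] \<in> S)} =
        {u. length u = p \<and> sat F R (\<lambda>i. (u @ ps) ! i) (Exi (p + l) (rn \<rho> \<phi>))}"
      using e h(3) by auto
  qed
qed

lemma D_ex:
  fixes F :: "'f \<Rightarrow> 'u list \<Rightarrow> 'u" and R :: "'r \<Rightarrow> 'u list \<Rightarrow> bool"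
  assumes "S \<in> defsets F R (p + r) C"
  shows "{u. length u = p \<and> (\<exists>w. length w = r \<and> u @ w \<in> S)} \<in> defsets F R p C"
  using assms
proof (induction r arbitrary: S)
  case 0
  have "{u. length u = p \<and> (\<exists>w. length w = 0 \<and> u @ w \<in> S)} = S" using D_sub[OF 0[simplified]] by auto
  then show ?case using 0 by simp
next
  case (Suc r)
  define T where "T = {u. length u = p + r \<and> (\<exists>a. u @ [a] \<in> S)}"
  have "T \<in> defsets F R (p + r) C" unfolding T_def using Suc.prems by (intro D_ex1) simp
  then have IH: "{u. length u = p \<and> (\<exists>w. length w = r \<and> u @ w \<in> T)} \<in> defsets F R p C" by (rule Suc.IH)
  have "{u. length u = p \<and> (\<exists>w. length w = r \<and> u @ w \<in> T)} = {u. length u = p \<and> (\<exists>w. length w = Suc r \<and> u @ w \<in> S)}"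
  proof (intro Collect_cong conj_cong refl iffI)
    fix u assume "length u = p" "\<exists>w. length w = r \<and> u @ w \<in> T"
    then obtain w a where "length w = r" "(u @ w) @ [a] \<in> S" unfolding T_def by auto
    then show "\<exists>w. length w = Suc r \<and> u @ w \<in> S" by (intro exI[of _ "w @ [a]"]) simp
  next
    fix u assume u: "length u = p" "\<exists>w. length w = Suc r \<and> u @ w \<in> S"
    then obtain w where w: "length w = Suc r" "u @ w \<in> S" by blast
    then obtain w' a where "w = w' @ [a]" by (metis length_Suc_conv_rev)
    then show "\<exists>w. length w = r \<and> u @ w \<in> T" using w u unfolding T_def by (intro exI[of _ w']) auto
  qed
  then show ?case using IH by simp
qed



lemma alg_defs:
  fixes F :: "'f \<Rightarrow> 'u list \<Rightarrow> 'u" and R :: "'r \<Rightarrow> 'u list \<Rightarrow> bool"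
  shows "alg {v. length v = p} (defsets F R p C)"
  unfolding alg_def
proof (intro conjI ballI)
  show "{v. length v = p} \<in> defsets F R p C" by (rule D_univ)
next
  fix a assume "a \<in> defsets F R p C" then show "a \<subseteq> {v. length v = p}" by (rule D_sub)
next
  fix a assume "a \<in> defsets F R p C" then show "{v. length v = p} - a \<in> defsets F R p C" by (rule D_compl)
next
  fix a b assume a: "a \<in> defsets F R p C" and b: "b \<in> defsets F R p C"
  have "a \<union> b = {v. length v = p} - (({v. length v = p} - a) \<inter> ({v. length v = p} - b))"
    using D_sub[OF a] D_sub[OF b] by blast
  moreover have "{v. length v = p} - (({v. length v = p} - a) \<inter> ({v. length v = p} - b)) \<in> defsets F R p C"
    by (intro D_compl D_int a b)
  ultimately show "a \<union> b \<in> defsets F R p C" by simp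
qed

lemma chg_keisler:
  fixes F :: "'f \<Rightarrow> 'u list \<Rightarrow> 'u" and R :: "'r \<Rightarrow> 'u list \<Rightarrow> bool"
  assumes "keisler F R p C m" shows "chg {v. length v = p} (defsets F R p C) m"
  using assms unfolding keisler_def chg_def by blast

lemma small_insert:
  assumes "infinite K" "small K A" shows "small K (insert x A)"
  unfolding small_def
proof
  assume "\<exists>g. inj_on g K \<and> g ` K \<subseteq> insert x A"
  then obtain g where g: "inj_on g K" "g ` K \<subseteq> insert x A" by blast
  show False
  proof (cases "\<exists>y\<in>K. g y = x")
    case True
    then obtain y where y: "y \<in> K" "g y = x" by blast
    obtain h where h: "bij_betw h K (K - {y})" using infinite_imp_bij_betw[OF assms(1)] by blast
    have hK: "inj_on h K" "h ` K = K - {y}" using h unfolding bij_betw_def by auto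
    have "inj_on g (h ` K)" unfolding hK(2) using g(1) by (rule inj_on_subset) blast
    then have "inj_on (g \<circ> h) K" using hK(1) by (intro comp_inj_on)
    moreover have "(g \<circ> h) ` K \<subseteq> A"
    proof
      fix z assume "z \<in> (g \<circ> h) ` K"
      then obtain u where u: "u \<in> K" "z = g (h u)" by auto
      have hu: "h u \<in> K - {y}" using h u(1) unfolding bij_betw_def by blast
      then have "g (h u) \<noteq> x" using y g(1) unfolding inj_on_def by blast
      moreover have "g (h u) \<in> insert x A" using hu g(2) by blast
      ultimately show "z \<in> A" using u by simp
    qed
    ultimately show False using assms(2) unfolding small_def by blast
  next
    case False
    then have "g ` K \<subseteq> A" using g(2) by blast
    then show False using assms(2) g(1) unfolding small_def by blast
  qed
qed

lemma small_union_finite: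
  assumes "infinite K" "small K A" "finite P" shows "small K (A \<union> P)"
  using assms(3)
proof (induction P rule: finite_induct)
  case empty then show ?case using assms(2) by simp
next
  case (insert x P)
  have "A \<union> insert x P = insert x (A \<union> P)" by blast
  then show ?case using small_insert[OF assms(1) insert.IH] by simp
qed

lemma map_nth_take: "n \<le> length x \<Longrightarrow> map (\<lambda>j. x ! j) [0..<n] = take n x"
  by (rule nth_equalityI) auto

lemma map_nth_drop: "length x = n + m \<Longrightarrow> map (\<lambda>j. x ! (n + j)) [0..<m] = drop n x"
  by (rule nth_equalityI) auto

lemma D_cylx:
  fixes F :: "'f \<Rightarrow> 'u list \<Rightarrow> 'u" and R :: "'r \<Rightarrow> 'u list \<Rightarrow> bool"
  assumes "D \<in> defsets F R n C"
  shows "{v @ w | v w. v \<in> D \<and> length w = k} \<in> defsets F R (n + k) C"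
proof -
  have "{x. length x = n + k \<and> map (\<lambda>j. x ! j) [0..<n] \<in> D} \<in> defsets F R (n + k) C"
    using assms by (rule D_pb) simp
  moreover have "{x. length x = n + k \<and> map (\<lambda>j. x ! j) [0..<n] \<in> D} = {v @ w | v w. v \<in> D \<and> length w = k}"
  proof (intro equalityI subsetI)
    fix x assume "x \<in> {x. length x = n + k \<and> map (\<lambda>j. x ! j) [0..<n] \<in> D}"
    then have x: "length x = n + k" "take n x \<in> D" using map_nth_take[of n x] by auto
    then show "x \<in> {v @ w | v w. v \<in> D \<and> length w = k}"
      by (intro CollectI exI[of _ "take n x"] exI[of _ "drop n x"]) auto
  next
    fix x assume "x \<in> {v @ w | v w. v \<in> D \<and> length w = k}"
    then obtain v w where vw: "x = v @ w" "v \<in> D" "length w = k" by blast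
    have "length v = n" using D_sub[OF assms] vw(2) by blast
    then show "x \<in> {x. length x = n + k \<and> map (\<lambda>j. x ! j) [0..<n] \<in> D}"
      using vw map_nth_take[of n x] by auto
  qed
  ultimately show ?thesis by simp
qed

lemma D_cyly:
  fixes F :: "'f \<Rightarrow> 'u list \<Rightarrow> 'u" and R :: "'r \<Rightarrow> 'u list \<Rightarrow> bool"
  assumes "E \<in> defsets F R m C"
  shows "{v @ w | v w. length v = n \<and> w \<in> E} \<in> defsets F R (n + m) C"
proof -
  have "{x. length x = n + m \<and> map (\<lambda>j. x ! (n + j)) [0..<m] \<in> E} \<in> defsets F R (n + m) C"
    using assms by (rule D_pb) simp
  moreover have "{x. length x = n + m \<and> map (\<lambda>j. x ! (n + j)) [0..<m] \<in> E} = {v @ w | v w. length v = n \<and> w \<in> E}"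
  proof (intro equalityI subsetI)
    fix x assume "x \<in> {x. length x = n + m \<and> map (\<lambda>j. x ! (n + j)) [0..<m] \<in> E}"
    then have x: "length x = n + m" "drop n x \<in> E" using map_nth_drop[of x n m] by auto
    then show "x \<in> {v @ w | v w. length v = n \<and> w \<in> E}"
      by (intro CollectI exI[of _ "take n x"] exI[of _ "drop n x"]) auto
  next
    fix x assume "x \<in> {v @ w | v w. length v = n \<and> w \<in> E}"
    then obtain v w where vw: "x = v @ w" "length v = n" "w \<in> E" by blast
    have "length w = m" using D_sub[OF assms] vw(3) by blast
    then show "x \<in> {x. length x = n + m \<and> map (\<lambda>j. x ! (n + j)) [0..<m] \<in> E}"
      using vw map_nth_drop[of x n m] by auto
  qed
  ultimately show ?thesis by simp
qed


lemma map_s1: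
  assumes "length y = n + m" "length w = k"
  shows "map (\<lambda>j. (y @ w) ! (if j < n then j else m + j)) [0..<n + k] = take n y @ w"
  by (rule nth_equalityI) (use assms in \<open>auto simp: nth_append\<close>)

lemma map_s2:
  assumes "length y = n + m" "length w = k"
  shows "map (\<lambda>j. (y @ w) ! (if j < k then n + m + j else n + (j - k))) [0..<k + m] = w @ drop n y"
  by (rule nth_equalityI) (use assms in \<open>auto simp: nth_append\<close>)

lemma D_img:
  fixes F :: "'f \<Rightarrow> 'u list \<Rightarrow> 'u" and R :: "'r \<Rightarrow> 'u list \<Rightarrow> bool"
  assumes a: "a \<in> defsets F R (n + k) C" and G: "G \<in> defsets F R (k + m) C"
    and Gmem: "\<And>w z. length w = k \<Longrightarrow> length z = m \<Longrightarrow> (w @ z \<in> G \<longleftrightarrow> z = f w)"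
    and flen: "\<forall>v. length v = k \<longrightarrow> length (f v) = m"
  shows "(\<lambda>v. take n v @ f (drop n v)) ` a \<in> defsets F R (n + m) C"
proof -
  define s1 where "s1 = (\<lambda>j::nat. if j < n then j else m + j)"
  define s2 where "s2 = (\<lambda>j::nat. if j < k then n + m + j else n + (j - k))"
  define P where "P = {x. length x = (n + m) + k \<and> map (\<lambda>j. x ! s1 j) [0..<n + k] \<in> a} \<inter>
                      {x. length x = (n + m) + k \<and> map (\<lambda>j. x ! s2 j) [0..<k + m] \<in> G}"
  have P: "P \<in> defsets F R ((n + m) + k) C" unfolding P_def
    by (intro D_int D_pb a G) (auto simp: s1_def s2_def)
  have "{y. length y = n + m \<and> (\<exists>w. length w = k \<and> y @ w \<in> P)} \<in> defsets F R (n + m) C"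
    using P by (rule D_ex)
  moreover have "{y. length y = n + m \<and> (\<exists>w. length w = k \<and> y @ w \<in> P)} = (\<lambda>v. take n v @ f (drop n v)) ` a"
  proof (intro equalityI subsetI)
    fix y assume "y \<in> {y. length y = n + m \<and> (\<exists>w. length w = k \<and> y @ w \<in> P)}"
    then obtain w where y: "length y = n + m" and w: "length w = k" "y @ w \<in> P" by blast
    have m1: "take n y @ w \<in> a" using w y map_s1[OF y w(1)] unfolding P_def s1_def by simp
    have m2: "w @ drop n y \<in> G" using w y map_s2[OF y w(1)] unfolding P_def s2_def by simp
    have "drop n y = f w" using Gmem[of w "drop n y"] m2 w y by simp
    have "(\<lambda>v. take n v @ f (drop n v)) (take n y @ w) = take n y @ f w" using y by simp
    also have "\<dots> = take n y @ drop n y" using \<open>drop n y = f w\<close> by simp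
    finally have "y = (\<lambda>v. take n v @ f (drop n v)) (take n y @ w)" by simp
    then show "y \<in> (\<lambda>v. take n v @ f (drop n v)) ` a" using m1 by blast
  next
    fix y assume "y \<in> (\<lambda>v. take n v @ f (drop n v)) ` a"
    then obtain v where v: "v \<in> a" "y = take n v @ f (drop n v)" by blast
    have lv: "length v = n + k" using D_sub[OF a] v(1) by blast
    have lf: "length (f (drop n v)) = m" using flen lv by simp
    have ly: "length y = n + m" using v(2) lv lf by simp
    have ty: "take n y = take n v" "drop n y = f (drop n v)" using v(2) lv by auto
    have w: "length (drop n v) = k" using lv by simp
    have "take n y @ drop n v = v" using ty by simp
    then have m1: "map (\<lambda>j. (y @ drop n v) ! s1 j) [0..<n + k] \<in> a" using map_s1[OF ly w] v(1) unfolding s1_def by simp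
    have "drop n v @ drop n y \<in> G" using Gmem[OF w] ty lf by simp
    then have m2: "map (\<lambda>j. (y @ drop n v) ! s2 j) [0..<k + m] \<in> G" using map_s2[OF ly w] unfolding s2_def by simp
    have "y @ drop n v \<in> P" unfolding P_def using m1 m2 ly w by simp
    then show "y \<in> {y. length y = n + m \<and> (\<exists>w. length w = k \<and> y @ w \<in> P)}" using ly w by blast
  qed
  ultimately show ?thesis by simp
qed

lemma D_pre:
  fixes F :: "'f \<Rightarrow> 'u list \<Rightarrow> 'u" and R :: "'r \<Rightarrow> 'u list \<Rightarrow> bool"
  assumes E: "E \<in> defsets F R m C" and G: "G \<in> defsets F R (k + m) C"
    and Gmem: "\<And>w z. length w = k \<Longrightarrow> length z = m \<Longrightarrow> (w @ z \<in> G \<longleftrightarrow> z = f w)"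
    and flen: "\<forall>v. length v = k \<longrightarrow> length (f v) = m"
  shows "{w. length w = k \<and> f w \<in> E} \<in> defsets F R k C"
proof -
  define P where "P = G \<inter> {x. length x = k + m \<and> map (\<lambda>j. x ! (k + j)) [0..<m] \<in> E}"
  have P: "P \<in> defsets F R (k + m) C" unfolding P_def by (intro D_int D_pb E G) auto
  have "{w. length w = k \<and> (\<exists>z. length z = m \<and> w @ z \<in> P)} \<in> defsets F R k C"
    using P by (rule D_ex)
  moreover have "{w. length w = k \<and> (\<exists>z. length z = m \<and> w @ z \<in> P)} = {w. length w = k \<and> f w \<in> E}"
  proof (intro Collect_cong conj_cong refl iffI)
    fix w assume w: "length w = k" and "\<exists>z. length z = m \<and> w @ z \<in> P"
    then obtain z where z: "length z = m" "w @ z \<in> P" by blast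
    have "z = f w" using z Gmem[OF w z(1)] unfolding P_def by blast
    moreover have "map (\<lambda>j. (w @ z) ! (k + j)) [0..<m] = z" using map_nth_drop[of "w @ z" k m] w z(1) by simp
    ultimately show "f w \<in> E" using z unfolding P_def by simp
  next
    fix w assume w: "length w = k" and fw: "f w \<in> E"
    have lf: "length (f w) = m" using flen w by simp
    have "map (\<lambda>j. (w @ f w) ! (k + j)) [0..<m] = f w" using map_nth_drop[of "w @ f w" k m] w lf by simp
    then have "w @ f w \<in> P" unfolding P_def using Gmem[OF w lf] fw w lf by simp
    then show "\<exists>z. length z = m \<and> w @ z \<in> P" using lf by blast
  qed
  ultimately show ?thesis by simp
qed


theorem corollary3p14:
  fixes K :: "'k set"
    and F :: "'f \<Rightarrow> 'u list \<Rightarrow> 'u" and R :: "'r \<Rightarrow> 'u list \<Rightarrow> bool"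
    and n k m :: nat
    and \<mu> \<nu> :: "'u list set \<Rightarrow> real"
    and f :: "'u list \<Rightarrow> 'u list"
  assumes "monster K F R"
    and "keisler F R n UNIV \<mu>"
    and "keisler F R k UNIV \<nu>"
    and "definable_map F R k m f"
    and "geE K F R n k \<mu> \<nu>"
  shows "geE K F R n m \<mu> (push F R k m f \<nu>)"
proof -
  obtain A where A: "small K A" and gA: "geE_A F R n k A \<mu> \<nu>" using assms(5) unfolding geE_def by blast
  obtain lam where klam: "keisler F R (n + k) A lam" and px: "proj_x F R n k A lam = restr F R n A \<mu>"
    and H: "\<And>\<omega>. keisler F R (n + k) UNIV \<omega> \<Longrightarrow> restr F R (n + k) A \<omega> = lam \<Longrightarrow> proj_x F R n k UNIV \<omega> = \<mu>
       \<Longrightarrow> proj_y F R n k UNIV \<omega> = \<nu>"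
    using gA unfolding geE_A_def by blast
  have flen: "\<forall>v. length v = k \<longrightarrow> length (f v) = m" using assms(4) unfolding definable_map_def by blast
  define G where "G = {v @ w | v w. length v = k \<and> w = f v}"
  have "G \<in> defsets F R (k + m) UNIV" using assms(4) unfolding definable_map_def G_def by blast
  then obtain \<phi>G :: "('f, 'r) form" and psG where hG: "set psG \<subseteq> UNIV" "fv \<phi>G \<subseteq> {..<(k + m) + length psG}"
    "G = {v. length v = k + m \<and> sat F R (\<lambda>i. (v @ psG) ! i) \<phi>G}" by (rule defsetsE)
  have G0: "G \<in> defsets F R (k + m) (set psG)" by (rule defsetsI[OF _ hG(2,3)]) simp
  define B where "B = A \<union> set psG"
  have infK: "infinite K" using assms(1) unfolding monster_def by blast
  have smallB: "small K B" unfolding B_def using small_union_finite[OF infK A] by simp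
  have GB: "G \<in> defsets F R (k + m) B" using G0 by (rule D_mono[rotated]) (simp add: B_def)
  have GU: "G \<in> defsets F R (k + m) UNIV" using G0 by (rule D_mono[rotated]) simp
  have Gmem: "w @ z \<in> G \<longleftrightarrow> z = f w" if "length w = k" "length z = m" for w z
  proof
    assume "w @ z \<in> G"
    then obtain v u where vu: "w @ z = v @ u" "length v = k" "u = f v" unfolding G_def by blast
    then have "w = v \<and> z = u" using that by (simp add: append_eq_append_conv)
    then show "z = f w" using vu by simp
  next
    assume "z = f w" then show "w @ z \<in> G" unfolding G_def using that by blast
  qed
  define X where "X = {v::'u list. length v = n + k}"
  define fhat where "fhat = (\<lambda>v::'u list. take n v @ f (drop n v))"
  have fhatX: "length (fhat v) = n + m" if "v \<in> X" for v
    using that flen unfolding X_def fhat_def by simp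
  have AAalg: "alg X (defsets F R (n + k) A)" unfolding X_def by (rule alg_defs)
  have AAchg: "chg X (defsets F R (n + k) A) lam" unfolding X_def using klam by (rule chg_keisler)
  have compat1: "\<forall>a\<in>defsets F R (n + k) A. \<forall>D\<in>defsets F R n UNIV. a \<subseteq> take n -` D \<longrightarrow> lam a \<le> \<mu> D"
  proof (intro ballI impI)
    fix a D assume a: "a \<in> defsets F R (n + k) A" and D: "D \<in> defsets F R n UNIV" and sub: "a \<subseteq> take n -` D"
    define a' where "a' = {u. length u = n \<and> (\<exists>w. length w = k \<and> u @ w \<in> a)}"
    have a'A: "a' \<in> defsets F R n A" unfolding a'_def using a by (rule D_ex)
    have a'U: "a' \<in> defsets F R n UNIV" using a'A by (rule D_mono[rotated]) simp
    have cylA: "{v @ w | v w. v \<in> a' \<and> length w = k} \<in> defsets F R (n + k) A" using a'A by (rule D_cylx)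
    have "a \<subseteq> {v @ w | v w. v \<in> a' \<and> length w = k}"
    proof
      fix x assume x: "x \<in> a"
      have lx: "length x = n + k" using D_sub[OF a] x by blast
      have "take n x \<in> a'" unfolding a'_def using lx x by (intro CollectI conjI exI[of _ "drop n x"]) auto
      then show "x \<in> {v @ w | v w. v \<in> a' \<and> length w = k}" using lx
        by (intro CollectI exI[of _ "take n x"] exI[of _ "drop n x"]) auto
    qed
    then have "lam a \<le> lam {v @ w | v w. v \<in> a' \<and> length w = k}"
      by (rule chg_mono[OF AAalg AAchg a cylA])
    also have "lam {v @ w | v w. v \<in> a' \<and> length w = k} = \<mu> a'"
      using fun_cong[OF px, of a'] a'A unfolding proj_x_def restr_def by simp
    also have "\<mu> a' \<le> \<mu> D"
    proof (rule chg_mono[OF alg_defs chg_keisler[OF assms(2)] a'U D])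
      show "a' \<subseteq> D"
      proof
        fix u assume "u \<in> a'"
        then obtain w where "length u = n" "u @ w \<in> a" unfolding a'_def by blast
        then show "u \<in> D" using sub by force
      qed
    qed
    finally show "lam a \<le> \<mu> D" .
  qed
  obtain \<omega>0 where w0: "\<forall>S. 0 \<le> \<omega>0 S \<and> \<omega>0 S \<le> 1" "\<forall>S T. S \<inter> T = {} \<longrightarrow> \<omega>0 (S \<union> T) = \<omega>0 S + \<omega>0 T"
      "\<omega>0 X = 1" "\<forall>a\<in>defsets F R (n + k) A. \<omega>0 a = lam a"
      "\<forall>D\<in>defsets F R n UNIV. \<omega>0 (take n -` D \<inter> X) = \<mu> D"
    using amalg[OF AAalg AAchg alg_defs chg_keisler[OF assms(2)], of "take n", OF _ compat1]
    unfolding X_def by auto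
  have mono0: "\<omega>0 S \<le> \<omega>0 T" if "S \<subseteq> T" for S T
  proof -
    have "\<omega>0 (S \<union> (T - S)) = \<omega>0 S + \<omega>0 (T - S)" using w0(2) by blast
    moreover have "S \<union> (T - S) = T" using that by blast
    ultimately show ?thesis using w0(1) by (metis le_add_same_cancel1)
  qed
  define lam' where "lam' = (\<lambda>E. if E \<in> defsets F R (n + m) B then \<omega>0 (fhat -` E \<inter> X) else 0)"
  have preU: "fhat -` {v. length v = n + m} \<inter> X = X" using fhatX by auto
  have klam': "keisler F R (n + m) B lam'"
    unfolding keisler_def
  proof (intro conjI ballI allI impI)
    fix D assume "D \<in> defsets F R (n + m) B" then show "0 \<le> lam' D" using w0(1) unfolding lam'_def by simp
  next
    show "lam' {v. length v = n + m} = 1" using D_univ preU w0(3) unfolding lam'_def by simp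
  next
    fix D E assume D: "D \<in> defsets F R (n + m) B" and E: "E \<in> defsets F R (n + m) B" and DE: "D \<inter> E = {}"
    have DE': "D \<union> E \<in> defsets F R (n + m) B" using alg_defs D E by (rule alg_un)
    have "(fhat -` D \<inter> X) \<inter> (fhat -` E \<inter> X) = {}" using DE by blast
    then have "\<omega>0 ((fhat -` D \<inter> X) \<union> (fhat -` E \<inter> X)) = \<omega>0 (fhat -` D \<inter> X) + \<omega>0 (fhat -` E \<inter> X)"
      using w0(2) by blast
    moreover have "(fhat -` D \<inter> X) \<union> (fhat -` E \<inter> X) = fhat -` (D \<union> E) \<inter> X" by blast
    ultimately show "lam' (D \<union> E) = lam' D + lam' E" unfolding lam'_def using D E DE' by simp
  next
    fix D assume "D \<notin> defsets F R (n + m) B" then show "lam' D = 0" unfolding lam'_def by simp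
  qed
  have cyl_pre: "fhat -` {v @ w | v w. v \<in> D \<and> length w = m} \<inter> X = take n -` D \<inter> X"
    if "D \<subseteq> {v. length v = n}" for D
  proof (intro equalityI subsetI)
    fix x assume "x \<in> fhat -` {v @ w | v w. v \<in> D \<and> length w = m} \<inter> X"
    then obtain v w where x: "x \<in> X" "fhat x = v @ w" "v \<in> D" "length w = m" by blast
    have "length v = n" using that x(3) by blast
    moreover have "length (take n x) = n" using x(1) unfolding X_def by simp
    ultimately have "take n x = v" using x(2) unfolding fhat_def by (simp add: append_eq_append_conv)
    then show "x \<in> take n -` D \<inter> X" using x by simp
  next
    fix x assume x: "x \<in> take n -` D \<inter> X"
    have "length (f (drop n x)) = m" using x flen unfolding X_def by simp
    then show "x \<in> fhat -` {v @ w | v w. v \<in> D \<and> length w = m} \<inter> X" using x unfolding fhat_def by blast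
  qed
  have px': "proj_x F R n m B lam' = restr F R n B \<mu>"
  proof
    fix D show "proj_x F R n m B lam' D = restr F R n B \<mu> D"
    proof (cases "D \<in> defsets F R n B")
      case True
      have cB: "{v @ w | v w. v \<in> D \<and> length w = m} \<in> defsets F R (n + m) B" using True by (rule D_cylx)
      have DU: "D \<in> defsets F R n UNIV" using True by (rule D_mono[rotated]) simp
      have "proj_x F R n m B lam' D = \<omega>0 (take n -` D \<inter> X)"
        unfolding proj_x_def lam'_def using True cB cyl_pre[OF D_sub[OF True]] by simp
      also have "\<dots> = \<mu> D" using w0(5) DU by blast
      finally show ?thesis unfolding restr_def using True by simp
    next
      case False then show ?thesis unfolding proj_x_def restr_def by simp
    qed
  qed
  have cond: "proj_y F R n m UNIV \<omega>' = push F R k m f \<nu>"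
    if k': "keisler F R (n + m) UNIV \<omega>'" and r': "restr F R (n + m) B \<omega>' = lam'"
      and p': "proj_x F R n m UNIV \<omega>' = \<mu>" for \<omega>'
  proof -
    have w'B: "\<omega>' E = \<omega>0 (fhat -` E \<inter> X)" if "E \<in> defsets F R (n + m) B" for E
      using fun_cong[OF r', of E] that unfolding restr_def lam'_def by simp
    have compat2: "\<forall>a\<in>defsets F R (n + k) A. \<forall>D\<in>defsets F R (n + m) UNIV. a \<subseteq> fhat -` D \<longrightarrow> lam a \<le> \<omega>' D"
    proof (intro ballI impI)
      fix a D assume a: "a \<in> defsets F R (n + k) A" and D: "D \<in> defsets F R (n + m) UNIV" and sub: "a \<subseteq> fhat -` D"
      have aB: "a \<in> defsets F R (n + k) B" using a by (rule D_mono[rotated]) (simp add: B_def)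
      have imB: "fhat ` a \<in> defsets F R (n + m) B" unfolding fhat_def
        by (rule D_img[OF aB GB]) (use Gmem flen in auto)
      have imU: "fhat ` a \<in> defsets F R (n + m) UNIV" using imB by (rule D_mono[rotated]) simp
      have aX: "a \<subseteq> X" using D_sub[OF a] unfolding X_def .
      have "lam a = \<omega>0 a" using w0(4) a by simp
      also have "\<omega>0 a \<le> \<omega>0 (fhat -` (fhat ` a) \<inter> X)" using aX by (intro mono0) blast
      also have "\<dots> = \<omega>' (fhat ` a)" using w'B[OF imB] by simp
      also have "\<omega>' (fhat ` a) \<le> \<omega>' D"
        by (rule chg_mono[OF alg_defs chg_keisler[OF k'] imU D]) (use sub in blast)
      finally show "lam a \<le> \<omega>' D" .
    qed
    obtain \<omega>1 where w1: "\<forall>S. 0 \<le> \<omega>1 S \<and> \<omega>1 S \<le> 1" "\<forall>S T. S \<inter> T = {} \<longrightarrow> \<omega>1 (S \<union> T) = \<omega>1 S + \<omega>1 T"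
        "\<omega>1 X = 1" "\<forall>a\<in>defsets F R (n + k) A. \<omega>1 a = lam a"
        "\<forall>D\<in>defsets F R (n + m) UNIV. \<omega>1 (fhat -` D \<inter> X) = \<omega>' D"
      using amalg[OF AAalg AAchg alg_defs chg_keisler[OF k'] _ compat2] fhatX by auto
    define \<omega> where "\<omega> = restr F R (n + k) UNIV \<omega>1"
    have k\<omega>: "keisler F R (n + k) UNIV \<omega>"
      unfolding keisler_def
    proof (intro conjI ballI allI impI)
      fix D assume "D \<in> defsets F R (n + k) UNIV" then show "0 \<le> \<omega> D" using w1(1) unfolding \<omega>_def restr_def by simp
    next
      show "\<omega> {v. length v = n + k} = 1" using D_univ w1(3) unfolding \<omega>_def restr_def X_def by simp
    next
      fix D E assume D: "D \<in> defsets F R (n + k) UNIV" and E: "E \<in> defsets F R (n + k) UNIV" and DE: "D \<inter> E = {}"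
      have DE': "D \<union> E \<in> defsets F R (n + k) UNIV" using alg_defs D E by (rule alg_un)
      show "\<omega> (D \<union> E) = \<omega> D + \<omega> E" unfolding \<omega>_def restr_def using D E DE' DE w1(2) by simp
    next
      fix D assume "D \<notin> defsets F R (n + k) UNIV" then show "\<omega> D = 0" unfolding \<omega>_def restr_def by simp
    qed
    have r\<omega>: "restr F R (n + k) A \<omega> = lam"
    proof
      fix S show "restr F R (n + k) A \<omega> S = lam S"
      proof (cases "S \<in> defsets F R (n + k) A")
        case True
        have "S \<in> defsets F R (n + k) UNIV" using True by (rule D_mono[rotated]) simp
        then show ?thesis using True w1(4) unfolding restr_def \<omega>_def by simp
      next
        case False
        then show ?thesis using klam unfolding restr_def keisler_def by simp
      qed
    qed
    have p\<omega>: "proj_x F R n k UNIV \<omega> = \<mu>"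
    proof
      fix D show "proj_x F R n k UNIV \<omega> D = \<mu> D"
      proof (cases "D \<in> defsets F R n UNIV")
        case True
        have c1: "{v @ w | v w. v \<in> D \<and> length w = k} \<in> defsets F R (n + k) UNIV" using True by (rule D_cylx)
        have c2: "{v @ w | v w. v \<in> D \<and> length w = m} \<in> defsets F R (n + m) UNIV" using True by (rule D_cylx)
        have eq: "{v @ w | v w. v \<in> D \<and> length w = k} = take n -` D \<inter> X"
        proof (intro equalityI subsetI)
          fix x assume "x \<in> {v @ w | v w. v \<in> D \<and> length w = k}"
          then obtain v w where "x = v @ w" "v \<in> D" "length w = k" by blast
          moreover have "length v = n" using D_sub[OF True] \<open>v \<in> D\<close> by blast
          ultimately show "x \<in> take n -` D \<inter> X" unfolding X_def by simp
        next
          fix x assume "x \<in> take n -` D \<inter> X"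
          then show "x \<in> {v @ w | v w. v \<in> D \<and> length w = k}" unfolding X_def
            by (intro CollectI exI[of _ "take n x"] exI[of _ "drop n x"]) auto
        qed
        have "proj_x F R n k UNIV \<omega> D = \<omega>1 (take n -` D \<inter> X)"
          unfolding proj_x_def \<omega>_def restr_def using True c1 eq by simp
        also have "\<dots> = \<omega>1 (fhat -` {v @ w | v w. v \<in> D \<and> length w = m} \<inter> X)"
          using cyl_pre[OF D_sub[OF True]] by simp
        also have "\<dots> = \<omega>' {v @ w | v w. v \<in> D \<and> length w = m}" using w1(5) c2 by blast
        also have "\<dots> = \<mu> D" using fun_cong[OF p', of D] True c2 unfolding proj_x_def by simp
        finally show ?thesis .
      next
        case False
        then show ?thesis using assms(2) unfolding proj_x_def keisler_def by simp
      qed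
    qed
    have py: "proj_y F R n k UNIV \<omega> = \<nu>" by (rule H[OF k\<omega> r\<omega> p\<omega>])
    show ?thesis
    proof
      fix E show "proj_y F R n m UNIV \<omega>' E = push F R k m f \<nu> E"
      proof (cases "E \<in> defsets F R m UNIV")
        case True
        define E' where "E' = {w. length w = k \<and> f w \<in> E}"
        have E'U: "E' \<in> defsets F R k UNIV" unfolding E'_def
          by (rule D_pre[OF True GU]) (use Gmem flen in auto)
        have c1: "{v @ w | v w. length v = n \<and> w \<in> E} \<in> defsets F R (n + m) UNIV" using True by (rule D_cyly)
        have c2: "{v @ w | v w. length v = n \<and> w \<in> E'} \<in> defsets F R (n + k) UNIV" using E'U by (rule D_cyly)
        have eq: "fhat -` {v @ w | v w. length v = n \<and> w \<in> E} \<inter> X = {v @ w | v w. length v = n \<and> w \<in> E'}"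
        proof (intro equalityI subsetI)
          fix x assume "x \<in> fhat -` {v @ w | v w. length v = n \<and> w \<in> E} \<inter> X"
          then obtain v w where x: "x \<in> X" "fhat x = v @ w" "length v = n" "w \<in> E" by blast
          have "length (take n x) = n" using x(1) unfolding X_def by simp
          then have "f (drop n x) = w" using x(2,3) unfolding fhat_def by (simp add: append_eq_append_conv)
          then have "drop n x \<in> E'" using x(1,4) unfolding E'_def X_def by simp
          then show "x \<in> {v @ w | v w. length v = n \<and> w \<in> E'}" using x(1) unfolding X_def
            by (intro CollectI exI[of _ "take n x"] exI[of _ "drop n x"]) auto
        next
          fix x assume "x \<in> {v @ w | v w. length v = n \<and> w \<in> E'}"
          then obtain v w where x: "x = v @ w" "length v = n" "length w = k" "f w \<in> E" unfolding E'_def by blast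
          then show "x \<in> fhat -` {v @ w | v w. length v = n \<and> w \<in> E} \<inter> X" unfolding fhat_def X_def by auto
        qed
        have "proj_y F R n m UNIV \<omega>' E = \<omega>' {v @ w | v w. length v = n \<and> w \<in> E}"
          unfolding proj_y_def using True by simp
        also have "\<dots> = \<omega>1 (fhat -` {v @ w | v w. length v = n \<and> w \<in> E} \<inter> X)"
          using bspec[OF w1(5) c1] by simp
        also have "\<dots> = \<omega>1 {v @ w | v w. length v = n \<and> w \<in> E'}" by (simp only: eq)
        also have "\<dots> = \<omega> {v @ w | v w. length v = n \<and> w \<in> E'}" unfolding \<omega>_def restr_def using c2 by simp
        also have "\<dots> = \<nu> E'" using fun_cong[OF py, of E'] E'U unfolding proj_y_def by simp
        also have "\<dots> = push F R k m f \<nu> E" unfolding push_def E'_def using True by simp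
        finally show ?thesis .
      next
        case False
        then show ?thesis unfolding proj_y_def push_def by simp
      qed
    qed
  qed
  show ?thesis
    unfolding geE_def geE_A_def
    using smallB klam' px' cond by blast
qed


end
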